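(* Let $\sigma : \mathcal{S} \to \mathcal{A}$ be a $\sim$-strategy; then so is $\tilde{\sigma} : \tilde{\mathcal{S}} \to \tilde{\mathcal{A}}$.
   Context: $e \rightarrow e'$ denotes immediate causal dependency in an event structure ($e<e'$ with nothing strictly between). An essp $\mathcal{A}$ is an event structure with polarities $A$ with a symmetry $\tilde A$ and open, jointly monic maps $l_A,r_A:\tilde A\to A$ forming an equivalence relation; configurations of $\tilde A$ correspond to bijections $\theta:x\cong y$ of the isomorphism family $\mathbb{S}_A$. $\tilde{\mathcal{A}}$ denotes $\tilde A$ equipped with its canonical higher symmetry, whose isomorphism family consists of bijections between $\theta,\theta'\in\mathbb{S}_A$ corresponding to commuting squares of isomorphisms in $\mathbb{S}_A$. For a map $\sigma$ of essps, $\tilde\sigma:\tilde A\to\tilde B$ is the induced map on symmetries, $\theta\mapsto\sigma\theta$. A $\sim$-strategy $\sigma:\mathcal{S}\to\mathcal{A}$ is a map of essps which is courteous (if $s_1 \rightarrow s_2$ with $\mathrm{pol}(s_1)=+$ or $\mathrm{pol}(s_2)=-$ then $\sigma s_1 \rightarrow \sigma s_2$), strong-receptive (if $\theta\in\mathbb{S}_S$ and $\sigma\theta$ extends in $\mathbb{S}_A$ by a pair $(a_1,a_2)$ of negative events, there is a unique extension $\theta\cup\{(s_1,s_2)\}\in\mathbb{S}_S$ with $\sigma s_i=a_i$), and thin ($\mathcal{S}$ is thin: whenever $\theta\in\mathbb{S}_S$ has two extensions in $\mathbb{S}_S$ by positive events only whose domains are compatible, their union is in $\mathbb{S}_S$).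 *)

theory Defs
  imports Main
begin

text \<open>An essp is an event structure with polarity together with its symmetry,
  presented by the isomorphism family S_A of bijections between configurations.
  Polarity: True = positive, False = negative.  Bijections are represented by
  their graphs (sets of pairs).\<close>

record 'a essp =
  es_ev  :: "'a set"
  es_le  :: "'a \<Rightarrow> 'a \<Rightarrow> bool"
  es_con :: "'a set set"
  es_pol :: "'a \<Rightarrow> bool"
  es_sym :: "('a \<times> 'a) set set"

definition is_es :: "('a, 'z) essp_scheme \<Rightarrow> bool" where
  "is_es E \<longleftrightarrow>
     (\<forall>a b. es_le E a b \<longrightarrow> a \<in> es_ev E \<and> b \<in> es_ev E) \<and>
     (\<forall>a\<in>es_ev E. es_le E a a) \<and>
     (\<forall>a b. es_le E a b \<and> es_le E b a \<longrightarrow> a = b) \<and>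
     (\<forall>a b c. es_le E a b \<and> es_le E b c \<longrightarrow> es_le E a c) \<and>
     (\<forall>a\<in>es_ev E. finite {b. es_le E b a}) \<and>
     (\<forall>X\<in>es_con E. finite X \<and> X \<subseteq> es_ev E) \<and>
     (\<forall>a\<in>es_ev E. {a} \<in> es_con E) \<and>
     (\<forall>X Y. X \<in> es_con E \<and> Y \<subseteq> X \<longrightarrow> Y \<in> es_con E) \<and>
     (\<forall>X a b. X \<in> es_con E \<and> a \<in> X \<and> es_le E b a \<longrightarrow> insert b X \<in> es_con E)"

definition conf :: "('a, 'z) essp_scheme \<Rightarrow> 'a set \<Rightarrow> bool" where
  "conf E x \<longleftrightarrow> x \<subseteq> es_ev E \<and> finite x \<and> x \<in> es_con E \<and>
     (\<forall>a\<in>x. \<forall>b. es_le E b a \<longrightarrow> b \<in> x)"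

definition es_lt :: "('a, 'z) essp_scheme \<Rightarrow> 'a \<Rightarrow> 'a \<Rightarrow> bool" where
  "es_lt E a b \<longleftrightarrow> es_le E a b \<and> a \<noteq> b"

definition imm :: "('a, 'z) essp_scheme \<Rightarrow> 'a \<Rightarrow> 'a \<Rightarrow> bool" where
  "imm E a b \<longleftrightarrow> es_lt E a b \<and> \<not> (\<exists>c. es_lt E a c \<and> es_lt E c b)"

definition bij_rel :: "('a \<times> 'b) set \<Rightarrow> 'a set \<Rightarrow> 'b set \<Rightarrow> bool" where
  "bij_rel \<theta> x y \<longleftrightarrow> \<theta> \<subseteq> x \<times> y \<and> (\<forall>a\<in>x. \<exists>!b. (a, b) \<in> \<theta>) \<and> (\<forall>b\<in>y. \<exists>!a. (a, b) \<in> \<theta>)"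

definition iso_family :: "('a, 'z) essp_scheme \<Rightarrow> bool" where
  "iso_family E \<longleftrightarrow>
     (\<forall>\<theta>\<in>es_sym E. \<exists>x y. conf E x \<and> conf E y \<and> bij_rel \<theta> x y) \<and>
     (\<forall>x. conf E x \<longrightarrow> Id_on x \<in> es_sym E) \<and>
     (\<forall>\<theta>\<in>es_sym E. \<theta>\<inverse> \<in> es_sym E) \<and>
     (\<forall>\<theta>\<in>es_sym E. \<forall>\<phi>\<in>es_sym E. Range \<theta> = Domain \<phi> \<longrightarrow> \<theta> O \<phi> \<in> es_sym E) \<and>
     (\<forall>\<theta>\<in>es_sym E. \<forall>x'. conf E x' \<and> x' \<subseteq> Domain \<theta> \<longrightarrow> \<theta> \<inter> (x' \<times> UNIV) \<in> es_sym E) \<and>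
     (\<forall>\<theta>\<in>es_sym E. \<forall>x'. conf E x' \<and> Domain \<theta> \<subseteq> x' \<longrightarrow>
         (\<exists>\<theta>'\<in>es_sym E. \<theta> \<subseteq> \<theta>' \<and> Domain \<theta>' = x'))"

definition is_essp :: "('a, 'z) essp_scheme \<Rightarrow> bool" where
  "is_essp E \<longleftrightarrow> is_es E \<and> iso_family E \<and>
     (\<forall>\<theta>\<in>es_sym E. \<forall>(a, b)\<in>\<theta>. es_pol E a = es_pol E b)"

definition es_map :: "('a, 'z) essp_scheme \<Rightarrow> ('b, 'w) essp_scheme \<Rightarrow> ('a \<Rightarrow> 'b) \<Rightarrow> bool" where
  "es_map S A f \<longleftrightarrow> f ` es_ev S \<subseteq> es_ev A \<and>
     (\<forall>s\<in>es_ev S. es_pol A (f s) = es_pol S s) \<and>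
     (\<forall>x. conf S x \<longrightarrow> conf A (f ` x) \<and> inj_on f x)"

definition act :: "('a \<Rightarrow> 'b) \<Rightarrow> ('a \<times> 'a) set \<Rightarrow> ('b \<times> 'b) set" where
  "act f \<theta> = map_prod f f ` \<theta>"

definition essp_map :: "('a, 'z) essp_scheme \<Rightarrow> ('b, 'w) essp_scheme \<Rightarrow> ('a \<Rightarrow> 'b) \<Rightarrow> bool" where
  "essp_map S A f \<longleftrightarrow> is_essp S \<and> is_essp A \<and> es_map S A f \<and>
     (\<forall>\<theta>\<in>es_sym S. act f \<theta> \<in> es_sym A)"

definition courteous :: "('a, 'z) essp_scheme \<Rightarrow> ('b, 'w) essp_scheme \<Rightarrow> ('a \<Rightarrow> 'b) \<Rightarrow> bool" where
  "courteous S A \<sigma> \<longleftrightarrow>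
     (\<forall>s1 s2. imm S s1 s2 \<and> (es_pol S s1 \<or> \<not> es_pol S s2) \<longrightarrow> imm A (\<sigma> s1) (\<sigma> s2))"

definition strong_receptive :: "('a, 'z) essp_scheme \<Rightarrow> ('b, 'w) essp_scheme \<Rightarrow> ('a \<Rightarrow> 'b) \<Rightarrow> bool" where
  "strong_receptive S A \<sigma> \<longleftrightarrow>
     (\<forall>\<theta>\<in>es_sym S. \<forall>a1 a2.
        (a1, a2) \<notin> act \<sigma> \<theta> \<and> insert (a1, a2) (act \<sigma> \<theta>) \<in> es_sym A \<and>
        \<not> es_pol A a1 \<and> \<not> es_pol A a2 \<longrightarrow>
        (\<exists>!p. insert p \<theta> \<in> es_sym S \<and> \<sigma> (fst p) = a1 \<and> \<sigma> (snd p) = a2))"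

definition thin :: "('a, 'z) essp_scheme \<Rightarrow> bool" where
  "thin S \<longleftrightarrow>
     (\<forall>\<theta> \<theta>1 \<theta>2. \<theta> \<in> es_sym S \<and> \<theta>1 \<in> es_sym S \<and> \<theta>2 \<in> es_sym S \<and> \<theta> \<subseteq> \<theta>1 \<and> \<theta> \<subseteq> \<theta>2 \<and>
        (\<forall>(s, s')\<in>\<theta>1 - \<theta>. es_pol S s \<and> es_pol S s') \<and>
        (\<forall>(s, s')\<in>\<theta>2 - \<theta>. es_pol S s \<and> es_pol S s') \<and>
        conf S (Domain \<theta>1 \<union> Domain \<theta>2) \<longrightarrow> \<theta>1 \<union> \<theta>2 \<in> es_sym S)"

definition tstrategy :: "('a, 'z) essp_scheme \<Rightarrow> ('b, 'w) essp_scheme \<Rightarrow> ('a \<Rightarrow> 'b) \<Rightarrow> bool" where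
  "tstrategy S A \<sigma> \<longleftrightarrow> essp_map S A \<sigma> \<and> courteous S A \<sigma> \<and> strong_receptive S A \<sigma> \<and> thin S"

text \<open>Events of \<tilde>A: prime bijections \<theta> : [a1] \<cong> [a2] in S_A, tagged with their top
  pair (a1,a2).  A configuration X of \<tilde>A corresponds to the bijection fst ` X.\<close>

definition tev :: "('a, 'z) essp_scheme \<Rightarrow> (('a \<times> 'a) \<times> ('a \<times> 'a) set) set" where
  "tev A = {((a1, a2), \<theta>). \<theta> \<in> es_sym A \<and> (a1, a2) \<in> \<theta> \<and> Domain \<theta> = {a. es_le A a a1}}"

definition tilde_base :: "'a essp \<Rightarrow> (('a \<times> 'a) \<times> ('a \<times> 'a) set) essp" where
  "tilde_base A = \<lparr> es_ev = tev A,
     es_le = (\<lambda>e e'. e \<in> tev A \<and> e' \<in> tev A \<and> snd e \<subseteq> snd e'),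
     es_con = {X. finite X \<and> X \<subseteq> tev A \<and> (\<exists>\<phi>\<in>es_sym A. \<Union> (snd ` X) \<subseteq> \<phi>)},
     es_pol = (\<lambda>e. es_pol A (fst (fst e))),
     es_sym = {} \<rparr>"

text \<open>Higher symmetry: bijections X \<cong> X' between configurations of \<tilde>A (i.e. between
  \<theta> = fst`X : x \<cong> y and \<theta>' = fst`X' : x' \<cong> y') induced by commuting squares
  \<phi> : x \<cong> x', \<psi> : y \<cong> y' in S_A with \<psi>\<theta> = \<theta>'\<phi>; the event with top (a,b) is sent to the
  event with top (\<phi> a, \<psi> b).\<close>
definition hsym :: "'a essp \<Rightarrow> ((('a \<times> 'a) \<times> ('a \<times> 'a) set) \<times> (('a \<times> 'a) \<times> ('a \<times> 'a) set)) set set" where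
  "hsym A = {\<Phi>. \<exists>X X' \<phi> \<psi>.
      conf (tilde_base A) X \<and> conf (tilde_base A) X' \<and> \<phi> \<in> es_sym A \<and> \<psi> \<in> es_sym A \<and>
      Domain \<phi> = Domain (fst ` X) \<and> Range \<phi> = Domain (fst ` X') \<and>
      Domain \<psi> = Range (fst ` X) \<and> Range \<psi> = Range (fst ` X') \<and>
      (\<forall>(a, b)\<in>fst ` X. \<forall>a' b'. (a, a') \<in> \<phi> \<and> (b, b') \<in> \<psi> \<longrightarrow> (a', b') \<in> fst ` X') \<and>
      \<Phi> = {(e, e'). e \<in> X \<and> e' \<in> X' \<and> (fst (fst e), fst (fst e')) \<in> \<phi> \<and>
                     (snd (fst e), snd (fst e')) \<in> \<psi>}}"

definition tilde :: "'a essp \<Rightarrow> (('a \<times> 'a) \<times> ('a \<times> 'a) set) essp" where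
  "tilde A = (tilde_base A)\<lparr> es_sym := hsym A \<rparr>"

text \<open>The induced map \<tilde>\<sigma> : \<tilde>S \<rightarrow> \<tilde>A (\<theta> \<mapsto> \<sigma>\<theta> on configurations): the prime event
  with top (s1,s2) and bijection \<theta> goes to the prime of \<sigma>\<theta> at (\<sigma> s1, \<sigma> s2), i.e. the
  restriction of \<sigma>\<theta> to [\<sigma> s1].\<close>
definition tmap :: "'b essp \<Rightarrow> ('a \<Rightarrow> 'b) \<Rightarrow> (('a \<times> 'a) \<times> ('a \<times> 'a) set) \<Rightarrow> (('b \<times> 'b) \<times> ('b \<times> 'b) set)" where
  "tmap A \<sigma> e = ((\<sigma> (fst (fst e)), \<sigma> (snd (fst e))),
                  {(a, b) \<in> act \<sigma> (snd e). es_le A a (\<sigma> (fst (fst e)))})"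

end

theory Submission
  imports Defs
begin


definition pr :: "('a, 'z) essp_scheme \<Rightarrow> ('a \<times> 'a) set \<Rightarrow> 'a \<Rightarrow> ('a \<times> 'a) set" where
  "pr A \<theta> a = {p \<in> \<theta>. es_le A (fst p) a}"

definition dn :: "('a, 'z) essp_scheme \<Rightarrow> 'a \<Rightarrow> 'a set" where
  "dn A a = {c. es_le A c a}"

lemma bij_rel_dom: "bij_rel \<theta> x y \<Longrightarrow> Domain \<theta> = x"
  unfolding bij_rel_def by force
lemma bij_rel_ran: "bij_rel \<theta> x y \<Longrightarrow> Range \<theta> = y"
  unfolding bij_rel_def by force

lemma essp_es: "is_essp A \<Longrightarrow> is_es A" by (simp add: is_essp_def)
lemma essp_iso: "is_essp A \<Longrightarrow> iso_family A" by (simp add: is_essp_def)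

lemma sym_bij:
  assumes "is_essp A" "\<theta> \<in> es_sym A"
  shows "conf A (Domain \<theta>) \<and> conf A (Range \<theta>) \<and> bij_rel \<theta> (Domain \<theta>) (Range \<theta>)"
proof -
  have "\<forall>\<theta>\<in>es_sym A. \<exists>x y. conf A x \<and> conf A y \<and> bij_rel \<theta> x y"
    using assms(1) unfolding is_essp_def iso_family_def by simp
  then obtain x y where "conf A x" "conf A y" "bij_rel \<theta> x y"
    using assms(2) by blast
  moreover have "Domain \<theta> = x" "Range \<theta> = y" using bij_rel_dom bij_rel_ran calculation by blast+
  ultimately show ?thesis by simp
qed

lemma sym_domc: "is_essp A \<Longrightarrow> \<theta> \<in> es_sym A \<Longrightarrow> conf A (Domain \<theta>)" using sym_bij by blast
lemma sym_ranc: "is_essp A \<Longrightarrow> \<theta> \<in> es_sym A \<Longrightarrow> conf A (Range \<theta>)" using sym_bij by blast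

lemma sym_fun: "is_essp A \<Longrightarrow> \<theta> \<in> es_sym A \<Longrightarrow> (a,b) \<in> \<theta> \<Longrightarrow> (a,c) \<in> \<theta> \<Longrightarrow> b = c"
  using sym_bij[of A \<theta>] unfolding bij_rel_def by blast
lemma sym_inj: "is_essp A \<Longrightarrow> \<theta> \<in> es_sym A \<Longrightarrow> (a,b) \<in> \<theta> \<Longrightarrow> (c,b) \<in> \<theta> \<Longrightarrow> a = c"
  using sym_bij[of A \<theta>] unfolding bij_rel_def by blast

lemma conf_fin: "conf A x \<Longrightarrow> finite x" by (simp add: conf_def)
lemma conf_ev: "conf A x \<Longrightarrow> x \<subseteq> es_ev A" by (simp add: conf_def)
lemma conf_con: "conf A x \<Longrightarrow> x \<in> es_con A" by (simp add: conf_def)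
lemma conf_dc: "conf A x \<Longrightarrow> a \<in> x \<Longrightarrow> es_le A c a \<Longrightarrow> c \<in> x" by (simp add: conf_def)

lemma sym_finite: "is_essp A \<Longrightarrow> \<theta> \<in> es_sym A \<Longrightarrow> finite \<theta>"
proof -
  assume a: "is_essp A" "\<theta> \<in> es_sym A"
  hence "\<theta> \<subseteq> Domain \<theta> \<times> Range \<theta>" by auto
  moreover have "finite (Domain \<theta> \<times> Range \<theta>)" using sym_bij[OF a] conf_fin by blast
  ultimately show ?thesis by (rule finite_subset)
qed

lemma iso_D:
  assumes "is_essp A"
  shows "(\<forall>x. conf A x \<longrightarrow> Id_on x \<in> es_sym A) \<and>
    (\<forall>\<theta>\<in>es_sym A. \<theta>\<inverse> \<in> es_sym A) \<and>
    (\<forall>\<theta>\<in>es_sym A. \<forall>\<phi>\<in>es_sym A. Range \<theta> = Domain \<phi> \<longrightarrow> \<theta> O \<phi> \<in> es_sym A) \<and>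
    (\<forall>\<theta>\<in>es_sym A. \<forall>x'. conf A x' \<and> x' \<subseteq> Domain \<theta> \<longrightarrow> \<theta> \<inter> (x' \<times> UNIV) \<in> es_sym A) \<and>
    (\<forall>\<theta>\<in>es_sym A. \<forall>x'. conf A x' \<and> Domain \<theta> \<subseteq> x' \<longrightarrow> (\<exists>\<theta>'\<in>es_sym A. \<theta> \<subseteq> \<theta>' \<and> Domain \<theta>' = x')) \<and>
    (\<forall>\<theta>\<in>es_sym A. \<forall>(a, b)\<in>\<theta>. es_pol A a = es_pol A b)"
  using assms unfolding is_essp_def iso_family_def by (elim conjE) (intro conjI; assumption)

lemma iso_D1: "is_essp A \<Longrightarrow> \<forall>x. conf A x \<longrightarrow> Id_on x \<in> es_sym A" using iso_D by (rule conjunct1)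
lemma iso_D2: "is_essp A \<Longrightarrow> \<forall>\<theta>\<in>es_sym A. \<theta>\<inverse> \<in> es_sym A" using iso_D[THEN conjunct2] by (rule conjunct1)
lemma iso_D3: "is_essp A \<Longrightarrow> \<forall>\<theta>\<in>es_sym A. \<forall>\<phi>\<in>es_sym A. Range \<theta> = Domain \<phi> \<longrightarrow> \<theta> O \<phi> \<in> es_sym A" using iso_D[THEN conjunct2, THEN conjunct2] by (rule conjunct1)
lemma iso_D4: "is_essp A \<Longrightarrow> \<forall>\<theta>\<in>es_sym A. \<forall>x'. conf A x' \<and> x' \<subseteq> Domain \<theta> \<longrightarrow> \<theta> \<inter> (x' \<times> UNIV) \<in> es_sym A" using iso_D[THEN conjunct2, THEN conjunct2, THEN conjunct2] by (rule conjunct1)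
lemma iso_D5: "is_essp A \<Longrightarrow> \<forall>\<theta>\<in>es_sym A. \<forall>x'. conf A x' \<and> Domain \<theta> \<subseteq> x' \<longrightarrow> (\<exists>\<theta>'\<in>es_sym A. \<theta> \<subseteq> \<theta>' \<and> Domain \<theta>' = x')" using iso_D[THEN conjunct2, THEN conjunct2, THEN conjunct2, THEN conjunct2] by (rule conjunct1)
lemma iso_D6: "is_essp A \<Longrightarrow> \<forall>\<theta>\<in>es_sym A. \<forall>(a, b)\<in>\<theta>. es_pol A a = es_pol A b" using iso_D[THEN conjunct2, THEN conjunct2, THEN conjunct2, THEN conjunct2] by (rule conjunct2)

lemma sym_conv: "is_essp A \<Longrightarrow> \<theta> \<in> es_sym A \<Longrightarrow> \<theta>\<inverse> \<in> es_sym A"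
  using iso_D2 by blast
lemma sym_comp: "is_essp A \<Longrightarrow> \<theta> \<in> es_sym A \<Longrightarrow> \<phi> \<in> es_sym A \<Longrightarrow> Range \<theta> = Domain \<phi> \<Longrightarrow> \<theta> O \<phi> \<in> es_sym A"
  using iso_D3 by blast
lemma sym_restr: "is_essp A \<Longrightarrow> \<theta> \<in> es_sym A \<Longrightarrow> conf A x \<Longrightarrow> x \<subseteq> Domain \<theta> \<Longrightarrow> \<theta> \<inter> (x \<times> UNIV) \<in> es_sym A"
  using iso_D4 by blast
lemma sym_ext:
  assumes "is_essp A" "\<theta> \<in> es_sym A" "conf A x" "Domain \<theta> \<subseteq> x"
  obtains \<theta>' where "\<theta>' \<in> es_sym A" "\<theta> \<subseteq> \<theta>'" "Domain \<theta>' = x"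
proof -
  have "\<forall>x'. conf A x' \<and> Domain \<theta> \<subseteq> x' \<longrightarrow> (\<exists>\<theta>'\<in>es_sym A. \<theta> \<subseteq> \<theta>' \<and> Domain \<theta>' = x')"
    using iso_D5[OF assms(1)] assms(2) by (rule bspec)
  hence "\<exists>\<theta>'\<in>es_sym A. \<theta> \<subseteq> \<theta>' \<and> Domain \<theta>' = x" using assms(3,4) by simp
  thus ?thesis using that by blast
qed
lemma sym_id: "is_essp A \<Longrightarrow> conf A x \<Longrightarrow> Id_on x \<in> es_sym A"
  using iso_D1 by blast
lemma sym_pol:
  assumes "is_essp A" "\<theta> \<in> es_sym A" "(a,b) \<in> \<theta>" shows "es_pol A a = es_pol A b"
proof -
  have "\<forall>(a, b)\<in>\<theta>. es_pol A a = es_pol A b" using iso_D6[OF assms(1)] assms(2) by (rule bspec)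
  thus ?thesis using assms(3) by blast
qed

lemma es_le_ev_D: "is_es A \<Longrightarrow> \<forall>a b. es_le A a b \<longrightarrow> a \<in> es_ev A \<and> b \<in> es_ev A" unfolding is_es_def by (elim conjE) assumption
lemma es_le_ev: "is_es A \<Longrightarrow> es_le A a b \<Longrightarrow> a \<in> es_ev A \<and> b \<in> es_ev A"
  using es_le_ev_D by blast

lemma es_refl_D: "is_es A \<Longrightarrow> \<forall>a\<in>es_ev A. es_le A a a" unfolding is_es_def by (elim conjE) assumption
lemma es_refl: "is_es A \<Longrightarrow> a \<in> es_ev A \<Longrightarrow> es_le A a a"
  using es_refl_D by blast

lemma es_antisym_D: "is_es A \<Longrightarrow> \<forall>a b. es_le A a b \<and> es_le A b a \<longrightarrow> a = b" unfolding is_es_def by (elim conjE) assumption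
lemma es_antisym: "is_es A \<Longrightarrow> es_le A a b \<Longrightarrow> es_le A b a \<Longrightarrow> a = b"
  using es_antisym_D by blast

lemma es_trans_D: "is_es A \<Longrightarrow> \<forall>a b c. es_le A a b \<and> es_le A b c \<longrightarrow> es_le A a c" unfolding is_es_def by (elim conjE) assumption
lemma es_trans: "is_es A \<Longrightarrow> es_le A a b \<Longrightarrow> es_le A b c \<Longrightarrow> es_le A a c"
  using es_trans_D by blast

lemma es_fin_D: "is_es A \<Longrightarrow> \<forall>a\<in>es_ev A. finite {b. es_le A b a}" unfolding is_es_def by (elim conjE) assumption
lemma es_fin: "is_es A \<Longrightarrow> a \<in> es_ev A \<Longrightarrow> finite {b. es_le A b a}"
  using es_fin_D by blast

lemma es_con_fin_D: "is_es A \<Longrightarrow> \<forall>X\<in>es_con A. finite X \<and> X \<subseteq> es_ev A" unfolding is_es_def by (elim conjE) assumption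
lemma es_con_fin: "is_es A \<Longrightarrow> X \<in> es_con A \<Longrightarrow> finite X \<and> X \<subseteq> es_ev A"
  using es_con_fin_D by blast

lemma es_single_D: "is_es A \<Longrightarrow> \<forall>a\<in>es_ev A. {a} \<in> es_con A" unfolding is_es_def by (elim conjE) assumption
lemma es_single: "is_es A \<Longrightarrow> a \<in> es_ev A \<Longrightarrow> {a} \<in> es_con A"
  using es_single_D by blast

lemma es_con_sub_D: "is_es A \<Longrightarrow> \<forall>X Y. X \<in> es_con A \<and> Y \<subseteq> X \<longrightarrow> Y \<in> es_con A" unfolding is_es_def by (elim conjE) assumption
lemma es_con_sub: "is_es A \<Longrightarrow> X \<in> es_con A \<Longrightarrow> Y \<subseteq> X \<Longrightarrow> Y \<in> es_con A"
  using es_con_sub_D by blast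

lemma conf_sub: "is_es A \<Longrightarrow> conf A x \<Longrightarrow> y \<subseteq> x \<Longrightarrow> (\<forall>a\<in>y. \<forall>b. es_le A b a \<longrightarrow> b \<in> y) \<Longrightarrow> conf A y"
  unfolding conf_def using es_con_sub finite_subset by blast

lemma conf_dn: "is_es A \<Longrightarrow> conf A x \<Longrightarrow> a \<in> x \<Longrightarrow> conf A (dn A a)"
proof -
  assume h: "is_es A" "conf A x" "a \<in> x"
  have "dn A a \<subseteq> x" unfolding dn_def using conf_dc[OF h(2,3)] by blast
  moreover have "\<forall>c\<in>dn A a. \<forall>b. es_le A b c \<longrightarrow> b \<in> dn A a" unfolding dn_def using es_trans[OF h(1)] by blast
  ultimately show ?thesis using conf_sub[OF h(1,2)] by blast
qed

lemma dn_sub: "conf A x \<Longrightarrow> a \<in> x \<Longrightarrow> dn A a \<subseteq> x"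
  unfolding dn_def by (auto intro: conf_dc)

lemma dn_self: "is_es A \<Longrightarrow> a \<in> es_ev A \<Longrightarrow> a \<in> dn A a"
  unfolding dn_def by (simp add: es_refl)

lemma dn_inj: "is_es A \<Longrightarrow> a \<in> es_ev A \<Longrightarrow> b \<in> es_ev A \<Longrightarrow> dn A a = dn A b \<Longrightarrow> a = b"
  unfolding dn_def by (metis mem_Collect_eq es_refl es_antisym)

lemma pr_alt: "pr A \<theta> a = \<theta> \<inter> (dn A a \<times> UNIV)"
  unfolding pr_def dn_def by auto

lemma pr_sym:
  assumes "is_essp A" "\<theta> \<in> es_sym A" "a \<in> Domain \<theta>"
  shows "pr A \<theta> a \<in> es_sym A" "Domain (pr A \<theta> a) = dn A a"
proof -
  have c: "conf A (Domain \<theta>)" using sym_domc assms by blast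
  have e: "is_es A" using assms essp_es by blast
  have "dn A a \<subseteq> Domain \<theta>" using dn_sub[OF c assms(3)] .
  thus "pr A \<theta> a \<in> es_sym A" unfolding pr_alt using sym_restr[OF assms(1,2) conf_dn[OF e c assms(3)]] by blast
  show "Domain (pr A \<theta> a) = dn A a" unfolding pr_alt using \<open>dn A a \<subseteq> Domain \<theta>\<close> by auto
qed

lemma pr_self: "is_essp A \<Longrightarrow> \<theta> \<in> es_sym A \<Longrightarrow> (a,b) \<in> \<theta> \<Longrightarrow> (a,b) \<in> pr A \<theta> a"
proof -
  assume h: "is_essp A" "\<theta> \<in> es_sym A" "(a,b) \<in> \<theta>"
  have "a \<in> es_ev A" using conf_ev[OF sym_domc[OF h(1,2)]] h(3) by blast
  thus ?thesis unfolding pr_def using es_refl[OF essp_es[OF h(1)]] h(3) by simp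
qed

lemma pr_sub: "pr A \<theta> a \<subseteq> \<theta>" unfolding pr_def by auto

lemma pr_mono:
  assumes "is_essp A" "\<phi> \<in> es_sym A" "\<theta> \<subseteq> \<phi>" "dn A a \<subseteq> Domain \<theta>"
  shows "pr A \<theta> a = pr A \<phi> a"
proof
  show "pr A \<theta> a \<subseteq> pr A \<phi> a" using assms(3) unfolding pr_alt by blast
  show "pr A \<phi> a \<subseteq> pr A \<theta> a"
  proof
    fix p assume p: "p \<in> pr A \<phi> a"
    obtain c d where pcd: "p = (c,d)" by force
    have "c \<in> dn A a" "(c,d) \<in> \<phi>" using p pcd unfolding pr_alt by auto
    then obtain d' where "(c,d') \<in> \<theta>" using assms(4) by blast
    moreover have "d' = d" using sym_fun[OF assms(1,2)] \<open>(c,d) \<in> \<phi>\<close> calculation assms(3) by blast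
    ultimately show "p \<in> pr A \<theta> a" using pcd \<open>c \<in> dn A a\<close> unfolding pr_alt by blast
  qed
qed

lemma pr_char:
  assumes "is_essp A" "\<theta> \<in> es_sym A" "\<chi> \<subseteq> \<theta>" "Domain \<chi> = dn A a"
  shows "\<chi> = pr A \<theta> a"
proof -
  have "pr A \<chi> a = \<chi>" unfolding pr_alt using assms(4) by (auto simp flip: assms(4))
  moreover have "pr A \<chi> a = pr A \<theta> a" using pr_mono[OF assms(1,2,3)] assms(4) by blast
  ultimately show ?thesis by simp
qed



definition primes :: "('a, 'z) essp_scheme \<Rightarrow> ('a \<times> 'a) set \<Rightarrow> (('a \<times> 'a) \<times> ('a \<times> 'a) set) set" where
  "primes A \<theta> = (\<lambda>p. (p, pr A \<theta> (fst p))) ` \<theta>"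

lemma tb_simps[simp]:
  "es_ev (tilde_base A) = tev A"
  "es_le (tilde_base A) = (\<lambda>e e'. e \<in> tev A \<and> e' \<in> tev A \<and> snd e \<subseteq> snd e')"
  "es_con (tilde_base A) = {X. finite X \<and> X \<subseteq> tev A \<and> (\<exists>\<phi>\<in>es_sym A. \<Union> (snd ` X) \<subseteq> \<phi>)}"
  "es_pol (tilde_base A) = (\<lambda>e. es_pol A (fst (fst e)))"
  "es_ev (tilde A) = tev A"
  "es_le (tilde A) = (\<lambda>e e'. e \<in> tev A \<and> e' \<in> tev A \<and> snd e \<subseteq> snd e')"
  "es_con (tilde A) = {X. finite X \<and> X \<subseteq> tev A \<and> (\<exists>\<phi>\<in>es_sym A. \<Union> (snd ` X) \<subseteq> \<phi>)}"
  "es_pol (tilde A) = (\<lambda>e. es_pol A (fst (fst e)))"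
  "es_sym (tilde A) = hsym A"
  by (simp_all add: tilde_base_def tilde_def)

lemma conf_tilde: "conf (tilde A) = conf (tilde_base A)"
  unfolding conf_def[abs_def] by simp

lemma conf_tb: "conf (tilde_base A) X \<longleftrightarrow> X \<subseteq> tev A \<and> finite X \<and> (\<exists>\<phi>\<in>es_sym A. \<Union> (snd ` X) \<subseteq> \<phi>) \<and>
   (\<forall>e\<in>X. \<forall>d. d \<in> tev A \<and> snd d \<subseteq> snd e \<longrightarrow> d \<in> X)"
  unfolding conf_def by auto

lemma tev_iff: "e \<in> tev A \<longleftrightarrow> snd e \<in> es_sym A \<and> fst e \<in> snd e \<and> Domain (snd e) = dn A (fst (fst e))"
  unfolding tev_def dn_def by (cases e) auto

lemma tev_prime:
  assumes "is_essp A" "\<theta> \<in> es_sym A" "(a,b) \<in> \<theta>"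
  shows "((a,b), pr A \<theta> a) \<in> tev A"
proof -
  have "a \<in> Domain \<theta>" using assms(3) by blast
  thus ?thesis unfolding tev_iff using pr_sym[OF assms(1,2)] pr_self[OF assms] by simp
qed

lemma tev_pr_eq:
  assumes "e \<in> tev A"
  shows "pr A (snd e) (fst (fst e)) = snd e"
  using assms unfolding tev_iff pr_alt by auto

lemma primes_mem: "e \<in> primes A \<theta> \<longleftrightarrow> (\<exists>a b. (a,b) \<in> \<theta> \<and> e = ((a,b), pr A \<theta> a))"
  unfolding primes_def by auto

lemma primes_I: "(a,b) \<in> \<theta> \<Longrightarrow> ((a,b), pr A \<theta> a) \<in> primes A \<theta>"
  unfolding primes_mem by blast

lemma fst_primes[simp]: "fst ` primes A \<theta> = \<theta>"
  unfolding primes_def by force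

lemma primes_tev: "is_essp A \<Longrightarrow> \<theta> \<in> es_sym A \<Longrightarrow> primes A \<theta> \<subseteq> tev A"
  unfolding primes_def using tev_prime by fastforce

lemma primes_eq_top: "e \<in> primes A \<theta> \<Longrightarrow> e' \<in> primes A \<theta> \<Longrightarrow> fst e = fst e' \<Longrightarrow> e = e'"
  unfolding primes_def by auto

lemma primes_inj: "primes A \<theta> = primes A \<theta>' \<Longrightarrow> \<theta> = \<theta>'"
  by (metis fst_primes)

lemma T1:
  assumes A: "is_essp A" and th: "\<theta> \<in> es_sym A"
  shows "conf (tilde_base A) (primes A \<theta>)"
proof -
  have fin: "finite (primes A \<theta>)" unfolding primes_def using sym_finite[OF A th] by simp
  have sub: "primes A \<theta> \<subseteq> tev A" using primes_tev[OF A th] .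
  have un: "\<Union> (snd ` primes A \<theta>) \<subseteq> \<theta>" unfolding primes_def using pr_sub by fastforce
  have dc: "\<forall>e\<in>primes A \<theta>. \<forall>d. es_le (tilde_base A) d e \<longrightarrow> d \<in> primes A \<theta>"
  proof (intro ballI allI impI)
    fix e d assume e: "e \<in> primes A \<theta>" and le: "es_le (tilde_base A) d e"
    obtain a b where ab: "(a,b) \<in> \<theta>" "e = ((a,b), pr A \<theta> a)" using e unfolding primes_mem by blast
    have dt: "d \<in> tev A" and ds: "snd d \<subseteq> pr A \<theta> a" using le ab by auto
    obtain c1 c2 \<chi> where d: "d = ((c1,c2),\<chi>)" by (metis prod.collapse)
    have "\<chi> \<in> es_sym A" "(c1,c2) \<in> \<chi>" "Domain \<chi> = dn A c1" using dt d unfolding tev_iff by auto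
    have "\<chi> \<subseteq> \<theta>" using ds d pr_sub by fastforce
    hence "\<chi> = pr A \<theta> c1" using pr_char[OF A th] \<open>Domain \<chi> = dn A c1\<close> by blast
    moreover have "(c1,c2) \<in> \<theta>" using \<open>\<chi> \<subseteq> \<theta>\<close> \<open>(c1,c2) \<in> \<chi>\<close> by blast
    ultimately show "d \<in> primes A \<theta>" using d primes_I by metis
  qed
  show ?thesis unfolding conf_tb using fin sub un th dc by auto
qed

lemma T2:
  assumes A: "is_essp A" and X: "conf (tilde_base A) X"
  shows "fst ` X \<in> es_sym A" "X = primes A (fst ` X)"
proof -
  have e: "is_es A" using essp_es[OF A] .
  have cX: "X \<subseteq> tev A \<and> finite X \<and> (\<exists>\<phi>\<in>es_sym A. \<Union> (snd ` X) \<subseteq> \<phi>) \<and>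
   (\<forall>e\<in>X. \<forall>d. d \<in> tev A \<and> snd d \<subseteq> snd e \<longrightarrow> d \<in> X)" using X unfolding conf_tb .
  have Xt: "X \<subseteq> tev A" using cX by (rule conjunct1)
  obtain \<phi> where ph: "\<phi> \<in> es_sym A" "\<Union> (snd ` X) \<subseteq> \<phi>" using cX[THEN conjunct2, THEN conjunct2, THEN conjunct1] by (elim bexE)
  have dc0: "\<forall>e\<in>X. \<forall>d. d \<in> tev A \<and> snd d \<subseteq> snd e \<longrightarrow> d \<in> X" using cX[THEN conjunct2, THEN conjunct2, THEN conjunct2] .
  have dcX: "\<And>e d. e \<in> X \<Longrightarrow> d \<in> tev A \<Longrightarrow> snd d \<subseteq> snd e \<Longrightarrow> d \<in> X"
    using dc0 by (meson)
  define \<theta> where "\<theta> = fst ` X"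
  have topin: "\<And>e. e \<in> X \<Longrightarrow> fst e \<in> snd e"
  proof -
    fix e assume "e \<in> X" hence "e \<in> tev A" using Xt by blast
    thus "fst e \<in> snd e" unfolding tev_iff by blast
  qed
  have th_sub: "\<theta> \<subseteq> \<phi>" unfolding \<theta>_def using topin ph(2) by blast
  have eprime: "\<And>e. e \<in> X \<Longrightarrow> snd e = pr A \<phi> (fst (fst e))"
  proof -
    fix e assume "e \<in> X"
    hence "e \<in> tev A" "snd e \<subseteq> \<phi>" using Xt ph(2) by auto
    thus "snd e = pr A \<phi> (fst (fst e))" using pr_char[OF A ph(1)] unfolding tev_iff by blast
  qed
  have phd: "conf A (Domain \<phi>)" using sym_domc[OF A ph(1)] .
  have all: "\<And>e c d. e \<in> X \<Longrightarrow> (c,d) \<in> snd e \<Longrightarrow> (c,d) \<in> \<theta>"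
  proof -
    fix e c d assume eX: "e \<in> X" and cd: "(c,d) \<in> snd e"
    have cdp: "(c,d) \<in> \<phi>" using cd ph(2) eX by blast
    have "((c,d), pr A \<phi> c) \<in> tev A" using tev_prime[OF A ph(1) cdp] .
    moreover have "pr A \<phi> c \<subseteq> snd e"
    proof -
      have "es_le A c (fst (fst e))" using cd eprime[OF eX] unfolding pr_def by auto
      thus ?thesis unfolding eprime[OF eX] pr_def using es_trans[OF e] by auto
    qed
    ultimately have "((c,d), pr A \<phi> c) \<in> X" using dcX[OF eX] by simp
    thus "(c,d) \<in> \<theta>" unfolding \<theta>_def by force
  qed
  define x where "x = Domain \<theta>"
  have xc: "conf A x"
  proof (rule conf_sub[OF e phd])
    show "x \<subseteq> Domain \<phi>" unfolding x_def using th_sub by blast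
    show "\<forall>a\<in>x. \<forall>b. es_le A b a \<longrightarrow> b \<in> x"
    proof (intro ballI allI impI)
      fix a b assume "a \<in> x" "es_le A b a"
      then obtain a2 where "(a,a2) \<in> \<theta>" unfolding x_def by blast
      then obtain ee where eeX0: "(a,a2) = fst ee" "ee \<in> X" unfolding \<theta>_def by (rule imageE)
      hence eeX: "ee \<in> X" "fst ee = (a,a2)" by simp_all
      have "ee \<in> tev A" using eeX Xt by blast
      hence "Domain (snd ee) = dn A a" using eeX(2) unfolding tev_iff by simp
      hence "b \<in> Domain (snd ee)" using \<open>es_le A b a\<close> unfolding dn_def by simp
      then obtain b2 where "(b,b2) \<in> snd ee" by blast
      thus "b \<in> x" using all[OF eeX(1)] unfolding x_def by blast
    qed
  qed
  have th_eq: "\<theta> = \<phi> \<inter> (x \<times> UNIV)"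
  proof
    show "\<theta> \<subseteq> \<phi> \<inter> (x \<times> UNIV)" using th_sub unfolding x_def by auto
    show "\<phi> \<inter> (x \<times> UNIV) \<subseteq> \<theta>"
    proof
      fix p assume "p \<in> \<phi> \<inter> (x \<times> UNIV)"
      then obtain c d where p: "p = (c,d)" "(c,d) \<in> \<phi>" "c \<in> x" by auto
      then obtain d' where "(c,d') \<in> \<theta>" unfolding x_def by blast
      moreover hence "d' = d" using sym_fun[OF A ph(1)] th_sub p(2) by blast
      ultimately show "p \<in> \<theta>" using p by simp
    qed
  qed
  have ths: "\<theta> \<in> es_sym A" unfolding th_eq
    using sym_restr[OF A ph(1) xc] th_sub unfolding x_def by blast
  thus "fst ` X \<in> es_sym A" unfolding \<theta>_def .
  show "X = primes A (fst ` X)"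
  proof
    show "X \<subseteq> primes A (fst ` X)"
    proof
      fix e assume eX: "e \<in> X"
      obtain a b where ab: "fst e = (a,b)" by force
      have abth: "(a,b) \<in> \<theta>" using eX ab unfolding \<theta>_def by force
      have "dn A a \<subseteq> Domain \<theta>"
        using dn_sub[OF sym_domc[OF A ths]] abth by blast
      hence "pr A \<theta> a = pr A \<phi> a" using pr_mono[OF A ph(1) th_sub] by blast
      hence "e = ((a,b), pr A \<theta> a)" using eprime[OF eX] ab by (metis fst_conv prod.collapse)
      thus "e \<in> primes A (fst ` X)" using primes_I abth unfolding \<theta>_def by metis
    qed
    show "primes A (fst ` X) \<subseteq> X"
    proof
      fix e assume "e \<in> primes A (fst ` X)"
      then obtain a b where ab: "(a,b) \<in> \<theta>" "e = ((a,b), pr A \<theta> a)" unfolding primes_mem \<theta>_def by blast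
      then obtain e' where e'X: "e' \<in> X" "fst e' = (a,b)" unfolding \<theta>_def by force
      have "dn A a \<subseteq> Domain \<theta>"
        using dn_sub[OF sym_domc[OF A ths]] ab by blast
      hence "pr A \<theta> a = pr A \<phi> a" using pr_mono[OF A ph(1) th_sub] by blast
      hence "e' = e" using eprime[OF e'X(1)] e'X(2) ab(2) by (metis fst_conv prod.collapse)
      thus "e \<in> X" using e'X by simp
    qed
  qed
qed

lemma T2':
  assumes "is_essp A" "conf (tilde_base A) X"
  obtains \<theta> where "\<theta> \<in> es_sym A" "X = primes A \<theta>"
  using T2[OF assms] by blast



lemma conf_tb_dc: "conf (tilde_base A) X \<Longrightarrow> e \<in> X \<Longrightarrow> d \<in> tev A \<Longrightarrow> snd d \<subseteq> snd e \<Longrightarrow> d \<in> X"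
proof -
  assume "conf (tilde_base A) X" "e \<in> X" "d \<in> tev A" "snd d \<subseteq> snd e"
  moreover have "\<forall>e\<in>X. \<forall>d. d \<in> tev A \<and> snd d \<subseteq> snd e \<longrightarrow> d \<in> X"
    using calculation(1) unfolding conf_tb by (elim conjE)
  ultimately show "d \<in> X" by blast
qed

lemma tev_top: "e \<in> tev A \<Longrightarrow> fst e \<in> snd e" unfolding tev_iff by simp
lemma tev_sym: "e \<in> tev A \<Longrightarrow> snd e \<in> es_sym A" unfolding tev_iff by simp
lemma tev_dom: "e \<in> tev A \<Longrightarrow> Domain (snd e) = dn A (fst (fst e))" unfolding tev_iff by simp
lemma tev_in_primes: "is_essp A \<Longrightarrow> e \<in> tev A \<Longrightarrow> e \<in> primes A (snd e)"
proof -
  assume A: "is_essp A" and e: "e \<in> tev A"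
  have "fst e \<in> snd e" using tev_top[OF e] .
  moreover have "e = (fst e, pr A (snd e) (fst (fst e)))" using tev_pr_eq[OF e] by simp
  ultimately show ?thesis unfolding primes_def by (rule rev_image_eqI) 
qed
lemma tev_ev: "is_essp A \<Longrightarrow> e \<in> tev A \<Longrightarrow> fst (fst e) \<in> es_ev A"
proof -
  assume A: "is_essp A" and e: "e \<in> tev A"
  have "fst e \<in> snd e" "snd e \<in> es_sym A" using tev_top[OF e] tev_sym[OF e] by auto
  hence "fst (fst e) \<in> Domain (snd e)" by (metis Domain.DomainI prod.collapse)
  thus ?thesis using conf_ev[OF sym_domc[OF A \<open>snd e \<in> es_sym A\<close>]] by blast
qed

lemma below_primes:
  fixes A :: "'a essp"
  assumes A: "is_essp A" and e: "e \<in> tev A" and d: "d \<in> tev A" "snd d \<subseteq> snd e"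
  shows "d \<in> primes A (snd e)"
proof -
  have th: "snd e \<in> es_sym A" using tev_sym[OF e] .
  have c: "conf (tilde_base A) (primes A (snd e))" using T1[OF A th] .
  show ?thesis using conf_tb_dc[OF c tev_in_primes[OF A e] d] .
qed

lemma is_es_tilde:
  fixes A :: "'a essp"
  assumes A: "is_essp A"
  shows "is_es (tilde A)"
proof -
  have e: "is_es A" using essp_es[OF A] .
  have antis: "\<And>d f. d \<in> tev A \<Longrightarrow> f \<in> tev A \<Longrightarrow> snd d = snd f \<Longrightarrow> d = f"
  proof -
    fix d f assume d: "d \<in> tev A" and f: "f \<in> tev A" and s: "snd d = snd f"
    have "d \<in> primes A (snd f)" using below_primes[OF A f d] s by simp
    moreover have "f \<in> primes A (snd f)" using tev_in_primes[OF A f] .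
    moreover have "fst (fst d) = fst (fst f)"
    proof -
      have "Domain (snd d) = dn A (fst (fst d))" "Domain (snd f) = dn A (fst (fst f))"
        using tev_dom[OF d] tev_dom[OF f] by auto
      thus ?thesis using dn_inj[OF e tev_ev[OF A d] tev_ev[OF A f]] s by simp
    qed
    moreover have "fst d \<in> snd f" "fst f \<in> snd f" "snd f \<in> es_sym A" using tev_top[OF d] tev_top[OF f] tev_sym[OF f] s by auto
    ultimately have "fst d = fst f" using sym_fun[OF A] by (metis prod.collapse)
    thus "d = f" using s by (simp add: prod_eq_iff)
  qed
  have fin: "\<And>f. f \<in> tev A \<Longrightarrow> finite {d. es_le (tilde A) d f}"
  proof -
    fix f assume f: "f \<in> tev A"
    have "snd f \<in> es_sym A" using tev_sym[OF f] .
    hence "finite (primes A (snd f))" unfolding primes_def using sym_finite[OF A] by blast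
    moreover have "{d. es_le (tilde A) d f} \<subseteq> primes A (snd f)"
      using below_primes[OF A f] by auto
    ultimately show "finite {d. es_le (tilde A) d f}" using finite_subset by blast
  qed
  have sing: "\<And>f. f \<in> tev A \<Longrightarrow> {f} \<in> es_con (tilde A)"
  proof -
    fix f assume f: "f \<in> tev A"
    have "snd f \<in> es_sym A" using tev_sym[OF f] .
    thus "{f} \<in> es_con (tilde A)" using f by auto
  qed
  have ins: "\<And>X a b. X \<in> es_con (tilde A) \<Longrightarrow> a \<in> X \<Longrightarrow> es_le (tilde A) b a \<Longrightarrow> insert b X \<in> es_con (tilde A)"
  proof -
    fix X a b assume X: "X \<in> es_con (tilde A)" and a: "a \<in> X" and ba: "es_le (tilde A) b a"
    obtain \<phi> where ph: "\<phi> \<in> es_sym A" "\<Union> (snd ` X) \<subseteq> \<phi>" using X by auto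
    have "snd b \<subseteq> \<phi>" using ba a ph(2) by auto
    thus "insert b X \<in> es_con (tilde A)" using X ph ba by auto
  qed
  have sub: "\<And>X Y. X \<in> es_con (tilde A) \<Longrightarrow> Y \<subseteq> X \<Longrightarrow> Y \<in> es_con (tilde A)"
  proof -
    fix X Y assume X: "X \<in> es_con (tilde A)" and Y: "Y \<subseteq> X"
    obtain \<phi> where ph: "\<phi> \<in> es_sym A" "\<Union> (snd ` X) \<subseteq> \<phi>" using X by auto
    have "\<Union> (snd ` Y) \<subseteq> \<phi>" using Y ph(2) by blast
    moreover have "finite Y" using X Y finite_subset by auto
    moreover have "Y \<subseteq> tev A" using X Y by auto
    ultimately show "Y \<in> es_con (tilde A)" using ph(1) by auto
  qed
  show ?thesis unfolding is_es_def
    apply (intro conjI)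
    subgoal by simp
    subgoal by simp
    subgoal using antis by auto
    subgoal by auto
    subgoal using fin by simp
    subgoal by simp
    subgoal using sing by simp
    subgoal using sub by blast
    subgoal using ins by blast
    done
qed

definition conj3 :: "('a \<times> 'a) set \<Rightarrow> ('a \<times> 'a) set \<Rightarrow> ('a \<times> 'a) set \<Rightarrow> ('a \<times> 'a) set" where
  "conj3 \<phi> \<theta> \<psi> = \<phi>\<inverse> O \<theta> O \<psi>"

definition valid :: "('a, 'z) essp_scheme \<Rightarrow> ('a \<times> 'a) set \<Rightarrow> ('a \<times> 'a) set \<Rightarrow> ('a \<times> 'a) set \<Rightarrow> bool" where
  "valid A \<theta> \<phi> \<psi> \<longleftrightarrow> \<theta> \<in> es_sym A \<and> \<phi> \<in> es_sym A \<and> \<psi> \<in> es_sym A \<and> Domain \<phi> = Domain \<theta> \<and> Domain \<psi> = Range \<theta>"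

definition hrel :: "('a, 'z) essp_scheme \<Rightarrow> ('a \<times> 'a) set \<Rightarrow> ('a \<times> 'a) set \<Rightarrow> ('a \<times> 'a) set \<Rightarrow> ((('a \<times> 'a) \<times> ('a \<times> 'a) set) \<times> (('a \<times> 'a) \<times> ('a \<times> 'a) set)) set" where
  "hrel A \<theta> \<phi> \<psi> = {(((a,b), pr A \<theta> a), ((a',b'), pr A (conj3 \<phi> \<theta> \<psi>) a')) | a b a' b'.
     (a,b) \<in> \<theta> \<and> (a,a') \<in> \<phi> \<and> (b,b') \<in> \<psi>}"

lemma conj3_mem: "(a',b') \<in> conj3 \<phi> \<theta> \<psi> \<longleftrightarrow> (\<exists>a b. (a,a') \<in> \<phi> \<and> (a,b) \<in> \<theta> \<and> (b,b') \<in> \<psi>)"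
  unfolding conj3_def by blast

lemma hrel_mem: "(e,e') \<in> hrel A \<theta> \<phi> \<psi> \<longleftrightarrow> (\<exists>a b a' b'. (a,b) \<in> \<theta> \<and> (a,a') \<in> \<phi> \<and> (b,b') \<in> \<psi> \<and>
   e = ((a,b), pr A \<theta> a) \<and> e' = ((a',b'), pr A (conj3 \<phi> \<theta> \<psi>) a'))"
  unfolding hrel_def by blast

lemma conj3_sym:
  assumes A: "is_essp A" and v: "valid A \<theta> \<phi> \<psi>"
  shows "conj3 \<phi> \<theta> \<psi> \<in> es_sym A" "Domain (conj3 \<phi> \<theta> \<psi>) = Range \<phi>" "Range (conj3 \<phi> \<theta> \<psi>) = Range \<psi>"
proof -
  have th: "\<theta> \<in> es_sym A" and ph: "\<phi> \<in> es_sym A" and ps: "\<psi> \<in> es_sym A"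
    and d1: "Domain \<phi> = Domain \<theta>" and d2: "Domain \<psi> = Range \<theta>" using v unfolding valid_def by auto
  have s1: "\<phi>\<inverse> O \<theta> \<in> es_sym A" using sym_comp[OF A sym_conv[OF A ph] th] d1 by simp
  have "Range (\<phi>\<inverse> O \<theta>) = Range \<theta>"
  proof
    show "Range (\<phi>\<inverse> O \<theta>) \<subseteq> Range \<theta>" by auto
    show "Range \<theta> \<subseteq> Range (\<phi>\<inverse> O \<theta>)"
    proof
      fix x assume "x \<in> Range \<theta>"
      then obtain a where ax: "(a,x) \<in> \<theta>" by blast
      then obtain a' where "(a,a') \<in> \<phi>" using d1 by blast
      thus "x \<in> Range (\<phi>\<inverse> O \<theta>)" using ax by blast
    qed
  qed
  hence s2: "\<phi>\<inverse> O \<theta> O \<psi> \<in> es_sym A" using sym_comp[OF A s1 ps] d2 by (simp add: O_assoc)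
  thus "conj3 \<phi> \<theta> \<psi> \<in> es_sym A" unfolding conj3_def .
  show "Domain (conj3 \<phi> \<theta> \<psi>) = Range \<phi>" unfolding conj3_def
  proof
    show "Domain (\<phi>\<inverse> O \<theta> O \<psi>) \<subseteq> Range \<phi>" by auto
    show "Range \<phi> \<subseteq> Domain (\<phi>\<inverse> O \<theta> O \<psi>)"
    proof
      fix x assume "x \<in> Range \<phi>"
      then obtain a where a: "(a,x) \<in> \<phi>" by blast
      then obtain b where b: "(a,b) \<in> \<theta>" using d1 by blast
      then obtain c where "(b,c) \<in> \<psi>" using d2 by blast
      thus "x \<in> Domain (\<phi>\<inverse> O \<theta> O \<psi>)" using a b by blast
    qed
  qed
  show "Range (conj3 \<phi> \<theta> \<psi>) = Range \<psi>" unfolding conj3_def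
  proof
    show "Range (\<phi>\<inverse> O \<theta> O \<psi>) \<subseteq> Range \<psi>" by auto
    show "Range \<psi> \<subseteq> Range (\<phi>\<inverse> O \<theta> O \<psi>)"
    proof
      fix y assume "y \<in> Range \<psi>"
      then obtain b where b: "(b,y) \<in> \<psi>" by blast
      then obtain a where a: "(a,b) \<in> \<theta>" using d2 by blast
      then obtain a' where "(a,a') \<in> \<phi>" using d1 by blast
      thus "y \<in> Range (\<phi>\<inverse> O \<theta> O \<psi>)" using a b by blast
    qed
  qed
qed

lemma H1:
  fixes A :: "'a essp"
  assumes A: "is_essp A" and P: "\<Phi> \<in> hsym A"
  shows "\<exists>\<theta> \<phi> \<psi>. valid A \<theta> \<phi> \<psi> \<and> \<Phi> = hrel A \<theta> \<phi> \<psi>"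
proof -
  obtain X X' \<phi> \<psi> where
    X: "conf (tilde_base A) X" and X': "conf (tilde_base A) X'" and ph: "\<phi> \<in> es_sym A" and ps: "\<psi> \<in> es_sym A"
    and d1: "Domain \<phi> = Domain (fst ` X)" and d2: "Range \<phi> = Domain (fst ` X')"
    and d3: "Domain \<psi> = Range (fst ` X)" and d4: "Range \<psi> = Range (fst ` X')"
    and cm: "\<forall>(a, b)\<in>fst ` X. \<forall>a' b'. (a, a') \<in> \<phi> \<and> (b, b') \<in> \<psi> \<longrightarrow> (a', b') \<in> fst ` X'"
    and Pd: "\<Phi> = {(e, e'). e \<in> X \<and> e' \<in> X' \<and> (fst (fst e), fst (fst e')) \<in> \<phi> \<and>
                     (snd (fst e), snd (fst e')) \<in> \<psi>}"
    using P unfolding hsym_def by blast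
  define \<theta> where "\<theta> = fst ` X"
  define \<theta>' where "\<theta>' = fst ` X'"
  have th: "\<theta> \<in> es_sym A" "X = primes A \<theta>" using T2[OF A X] unfolding \<theta>_def by auto
  have th': "\<theta>' \<in> es_sym A" "X' = primes A \<theta>'" using T2[OF A X'] unfolding \<theta>'_def by auto
  have D1: "Domain \<phi> = Domain \<theta>" and D2: "Range \<phi> = Domain \<theta>'" and D3: "Domain \<psi> = Range \<theta>"
    using d1 d2 d3 unfolding \<theta>_def \<theta>'_def by simp_all
  have v: "valid A \<theta> \<phi> \<psi>" unfolding valid_def using th ph ps D1 D3 by auto
  have cm': "\<And>a b a' b'. (a,b) \<in> \<theta> \<Longrightarrow> (a,a') \<in> \<phi> \<Longrightarrow> (b,b') \<in> \<psi> \<Longrightarrow> (a',b') \<in> \<theta>'"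
    using cm unfolding \<theta>_def \<theta>'_def by blast
  have eq: "\<theta>' = conj3 \<phi> \<theta> \<psi>"
  proof
    show "conj3 \<phi> \<theta> \<psi> \<subseteq> \<theta>'" unfolding conj3_def using cm' by blast
    show "\<theta>' \<subseteq> conj3 \<phi> \<theta> \<psi>"
    proof
      fix p assume p: "p \<in> \<theta>'"
      obtain a' b' where p': "p = (a',b')" by force
      have "a' \<in> Range \<phi>" using p p' D2 by blast
      then obtain a where a: "(a,a') \<in> \<phi>" by blast
      then obtain b where b: "(a,b) \<in> \<theta>" using D1 by blast
      then obtain b2 where b2: "(b,b2) \<in> \<psi>" using D3 by blast
      have "(a',b2) \<in> \<theta>'" using cm'[OF b a b2] .
      hence "b2 = b'" using sym_fun[OF A th'(1)] p p' by blast
      thus "p \<in> conj3 \<phi> \<theta> \<psi>" unfolding conj3_def using a b b2 p' by blast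
    qed
  qed
  have "\<Phi> = hrel A \<theta> \<phi> \<psi>"
  proof
    show "\<Phi> \<subseteq> hrel A \<theta> \<phi> \<psi>"
    proof
      fix q assume q: "q \<in> \<Phi>"
      obtain e e' where q': "q = (e,e')" by (rule prod.exhaust)
      have e: "e \<in> primes A \<theta>" and e': "e' \<in> primes A \<theta>'" and f1: "(fst (fst e), fst (fst e')) \<in> \<phi>"
        and f2: "(snd (fst e), snd (fst e')) \<in> \<psi>" using q q' Pd th th' by auto
      obtain a b where ab: "(a,b) \<in> \<theta>" "e = ((a,b), pr A \<theta> a)" using e unfolding primes_mem by blast
      obtain a' b' where ab': "(a',b') \<in> \<theta>'" "e' = ((a',b'), pr A \<theta>' a')" using e' unfolding primes_mem by blast
      show "q \<in> hrel A \<theta> \<phi> \<psi>" unfolding q' hrel_mem using ab ab' f1 f2 eq by auto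
    qed
    show "hrel A \<theta> \<phi> \<psi> \<subseteq> \<Phi>"
    proof
      fix q assume q: "q \<in> hrel A \<theta> \<phi> \<psi>"
      obtain e e' where q': "q = (e,e')" by (rule prod.exhaust)
      obtain a b a' b' where m: "(a,b) \<in> \<theta>" "(a,a') \<in> \<phi>" "(b,b') \<in> \<psi>"
        "e = ((a,b), pr A \<theta> a)" "e' = ((a',b'), pr A (conj3 \<phi> \<theta> \<psi>) a')"
        using q unfolding q' hrel_mem by blast
      have "(a',b') \<in> \<theta>'" using cm'[OF m(1-3)] .
      hence "e' \<in> X'" using th'(2) m(5) eq primes_I by metis
      moreover have "e \<in> X" using th(2) m(1,4) primes_I by metis
      ultimately show "q \<in> \<Phi>" unfolding Pd q' using m by simp
    qed
  qed
  thus ?thesis using v by blast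
qed

lemma H2:
  fixes A :: "'a essp"
  assumes A: "is_essp A" and v: "valid A \<theta> \<phi> \<psi>"
  shows "hrel A \<theta> \<phi> \<psi> \<in> hsym A"
proof -
  have th: "\<theta> \<in> es_sym A" and ph: "\<phi> \<in> es_sym A" and ps: "\<psi> \<in> es_sym A"
    and d1: "Domain \<phi> = Domain \<theta>" and d3: "Domain \<psi> = Range \<theta>" using v unfolding valid_def by auto
  define \<theta>' where "\<theta>' = conj3 \<phi> \<theta> \<psi>"
  have th': "\<theta>' \<in> es_sym A" "Domain \<theta>' = Range \<phi>" "Range \<theta>' = Range \<psi>"
    using conj3_sym[OF A v] unfolding \<theta>'_def by auto
  define X where "X = primes A \<theta>"
  define X' where "X' = primes A \<theta>'"
  have X: "conf (tilde_base A) X" unfolding X_def using T1[OF A th] .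
  have X': "conf (tilde_base A) X'" unfolding X'_def using T1[OF A th'(1)] .
  have cm: "\<forall>(a, b)\<in>fst ` X. \<forall>a' b'. (a, a') \<in> \<phi> \<and> (b, b') \<in> \<psi> \<longrightarrow> (a', b') \<in> fst ` X'"
    unfolding X_def X'_def fst_primes \<theta>'_def conj3_def by blast
  have Pd: "hrel A \<theta> \<phi> \<psi> = {(e, e'). e \<in> X \<and> e' \<in> X' \<and> (fst (fst e), fst (fst e')) \<in> \<phi> \<and>
                     (snd (fst e), snd (fst e')) \<in> \<psi>}"
  proof
    show "hrel A \<theta> \<phi> \<psi> \<subseteq> {(e, e'). e \<in> X \<and> e' \<in> X' \<and> (fst (fst e), fst (fst e')) \<in> \<phi> \<and>
                     (snd (fst e), snd (fst e')) \<in> \<psi>}"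
    proof
      fix q assume q: "q \<in> hrel A \<theta> \<phi> \<psi>"
      obtain e e' where q': "q = (e,e')" by (rule prod.exhaust)
      obtain a b a' b' where m: "(a,b) \<in> \<theta>" "(a,a') \<in> \<phi>" "(b,b') \<in> \<psi>"
        "e = ((a,b), pr A \<theta> a)" "e' = ((a',b'), pr A (conj3 \<phi> \<theta> \<psi>) a')"
        using q unfolding q' hrel_mem by blast
      have "(a',b') \<in> \<theta>'" unfolding \<theta>'_def conj3_mem using m by blast
      hence "e' \<in> X'" unfolding X'_def using m(5) primes_I unfolding \<theta>'_def by metis
      moreover have "e \<in> X" unfolding X_def using m(1,4) primes_I by metis
      ultimately show "q \<in> {(e, e'). e \<in> X \<and> e' \<in> X' \<and> (fst (fst e), fst (fst e')) \<in> \<phi> \<and>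
                     (snd (fst e), snd (fst e')) \<in> \<psi>}" unfolding q' using m by simp
    qed
    show "{(e, e'). e \<in> X \<and> e' \<in> X' \<and> (fst (fst e), fst (fst e')) \<in> \<phi> \<and>
                     (snd (fst e), snd (fst e')) \<in> \<psi>} \<subseteq> hrel A \<theta> \<phi> \<psi>"
    proof
      fix q assume q: "q \<in> {(e, e'). e \<in> X \<and> e' \<in> X' \<and> (fst (fst e), fst (fst e')) \<in> \<phi> \<and>
                     (snd (fst e), snd (fst e')) \<in> \<psi>}"
      obtain e e' where q': "q = (e,e')" by (rule prod.exhaust)
      have e: "e \<in> primes A \<theta>" and e': "e' \<in> primes A \<theta>'" and f1: "(fst (fst e), fst (fst e')) \<in> \<phi>"
        and f2: "(snd (fst e), snd (fst e')) \<in> \<psi>" using q q' unfolding X_def X'_def by auto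
      obtain a b where ab: "(a,b) \<in> \<theta>" "e = ((a,b), pr A \<theta> a)" using e unfolding primes_mem by blast
      obtain a' b' where ab': "(a',b') \<in> \<theta>'" "e' = ((a',b'), pr A \<theta>' a')" using e' unfolding primes_mem by blast
      show "q \<in> hrel A \<theta> \<phi> \<psi>" unfolding q' hrel_mem using ab ab' f1 f2 unfolding \<theta>'_def by auto
    qed
  qed
  have "Domain \<phi> = Domain (fst ` X)" "Range \<phi> = Domain (fst ` X')"
       "Domain \<psi> = Range (fst ` X)" "Range \<psi> = Range (fst ` X')"
    unfolding X_def X'_def fst_primes using d1 d3 th' by auto
  thus ?thesis unfolding hsym_def using X X' ph ps cm Pd by blast
qed

lemma hsym_iff: "is_essp (A::'a essp) \<Longrightarrow> \<Phi> \<in> hsym A \<longleftrightarrow> (\<exists>\<theta> \<phi> \<psi>. valid A \<theta> \<phi> \<psi> \<and> \<Phi> = hrel A \<theta> \<phi> \<psi>)"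
  using H1 H2 by blast



lemma valid_D:
  assumes "valid A \<theta> \<phi> \<psi>"
  shows "\<theta> \<in> es_sym A" "\<phi> \<in> es_sym A" "\<psi> \<in> es_sym A" "Domain \<phi> = Domain \<theta>" "Domain \<psi> = Range \<theta>"
  using assms unfolding valid_def by auto

lemma pr_eq:
  assumes A: "is_essp A" and th: "\<theta> \<in> es_sym A" and th2: "\<theta>2 \<in> es_sym A" and s: "\<theta> \<subseteq> \<theta>2" and a: "a \<in> Domain \<theta>"
  shows "pr A \<theta> a = pr A \<theta>2 a"
  using pr_mono[OF A th2 s] dn_sub[OF sym_domc[OF A th] a] by blast

lemma conj3_mono: "\<phi> \<subseteq> \<phi>2 \<Longrightarrow> \<theta> \<subseteq> \<theta>2 \<Longrightarrow> \<psi> \<subseteq> \<psi>2 \<Longrightarrow> conj3 \<phi> \<theta> \<psi> \<subseteq> conj3 \<phi>2 \<theta>2 \<psi>2"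
  unfolding conj3_def by blast

lemma pr_conj3_eq:
  assumes A: "is_essp A" and v: "valid A \<theta> \<phi> \<psi>" and v2: "valid A \<theta>2 \<phi>2 \<psi>2"
    and s: "\<phi> \<subseteq> \<phi>2" "\<theta> \<subseteq> \<theta>2" "\<psi> \<subseteq> \<psi>2" and a: "a \<in> Domain (conj3 \<phi> \<theta> \<psi>)"
  shows "pr A (conj3 \<phi> \<theta> \<psi>) a = pr A (conj3 \<phi>2 \<theta>2 \<psi>2) a"
  using pr_eq[OF A conj3_sym(1)[OF A v] conj3_sym(1)[OF A v2] conj3_mono[OF s] a] .

lemma hrel_dom:
  assumes v: "valid A \<theta> \<phi> \<psi>"
  shows "Domain (hrel A \<theta> \<phi> \<psi>) = primes A \<theta>"
proof
  show "Domain (hrel A \<theta> \<phi> \<psi>) \<subseteq> primes A \<theta>"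
  proof
    fix e assume "e \<in> Domain (hrel A \<theta> \<phi> \<psi>)"
    then obtain e' where "(e,e') \<in> hrel A \<theta> \<phi> \<psi>" by blast
    then obtain a b where "(a,b) \<in> \<theta>" "e = ((a,b), pr A \<theta> a)" unfolding hrel_mem by blast
    thus "e \<in> primes A \<theta>" using primes_I by metis
  qed
  show "primes A \<theta> \<subseteq> Domain (hrel A \<theta> \<phi> \<psi>)"
  proof
    fix e assume "e \<in> primes A \<theta>"
    then obtain a b where ab: "(a,b) \<in> \<theta>" "e = ((a,b), pr A \<theta> a)" unfolding primes_mem by blast
    then obtain a' where a': "(a,a') \<in> \<phi>" using valid_D(4)[OF v] by blast
    obtain b' where b': "(b,b') \<in> \<psi>" using ab valid_D(5)[OF v] by blast
    have "(e, ((a',b'), pr A (conj3 \<phi> \<theta> \<psi>) a')) \<in> hrel A \<theta> \<phi> \<psi>"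
      unfolding hrel_mem using ab a' b' by blast
    thus "e \<in> Domain (hrel A \<theta> \<phi> \<psi>)" by blast
  qed
qed

lemma hrel_ran:
  "Range (hrel A \<theta> \<phi> \<psi>) = primes A (conj3 \<phi> \<theta> \<psi>)"
proof
  show "Range (hrel A \<theta> \<phi> \<psi>) \<subseteq> primes A (conj3 \<phi> \<theta> \<psi>)"
  proof
    fix e' assume "e' \<in> Range (hrel A \<theta> \<phi> \<psi>)"
    then obtain e where "(e,e') \<in> hrel A \<theta> \<phi> \<psi>" by blast
    then obtain a b a' b' where m: "(a,b) \<in> \<theta>" "(a,a') \<in> \<phi>" "(b,b') \<in> \<psi>"
      "e' = ((a',b'), pr A (conj3 \<phi> \<theta> \<psi>) a')" unfolding hrel_mem by blast
    have "(a',b') \<in> conj3 \<phi> \<theta> \<psi>" unfolding conj3_mem using m by blast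
    thus "e' \<in> primes A (conj3 \<phi> \<theta> \<psi>)" using primes_I m(4) by metis
  qed
  show "primes A (conj3 \<phi> \<theta> \<psi>) \<subseteq> Range (hrel A \<theta> \<phi> \<psi>)"
  proof
    fix e' assume "e' \<in> primes A (conj3 \<phi> \<theta> \<psi>)"
    then obtain a' b' where ab: "(a',b') \<in> conj3 \<phi> \<theta> \<psi>" "e' = ((a',b'), pr A (conj3 \<phi> \<theta> \<psi>) a')"
      unfolding primes_mem by blast
    then obtain a b where m: "(a,a') \<in> \<phi>" "(a,b) \<in> \<theta>" "(b,b') \<in> \<psi>" unfolding conj3_mem by blast
    have "(((a,b), pr A \<theta> a), e') \<in> hrel A \<theta> \<phi> \<psi>" unfolding hrel_mem using ab m by blast
    thus "e' \<in> Range (hrel A \<theta> \<phi> \<psi>)" by blast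
  qed
qed

lemma hrel_fun:
  assumes A: "is_essp A" and v: "valid A \<theta> \<phi> \<psi>"
    and h1: "(e,e1) \<in> hrel A \<theta> \<phi> \<psi>" and h2: "(e,e2) \<in> hrel A \<theta> \<phi> \<psi>"
  shows "e1 = e2"
proof -
  obtain a b a' b' where m: "(a,b) \<in> \<theta>" "(a,a') \<in> \<phi>" "(b,b') \<in> \<psi>"
      "e = ((a,b), pr A \<theta> a)" "e1 = ((a',b'), pr A (conj3 \<phi> \<theta> \<psi>) a')" using h1 unfolding hrel_mem by blast
  obtain c d c' d' where n: "(c,d) \<in> \<theta>" "(c,c') \<in> \<phi>" "(d,d') \<in> \<psi>"
      "e = ((c,d), pr A \<theta> c)" "e2 = ((c',d'), pr A (conj3 \<phi> \<theta> \<psi>) c')" using h2 unfolding hrel_mem by blast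
  have "c = a" "d = b" using m(4) n(4) by auto
  hence "c' = a'" "d' = b'" using sym_fun[OF A valid_D(2)[OF v]] sym_fun[OF A valid_D(3)[OF v]] m n by blast+
  thus ?thesis using m(5) n(5) by simp
qed

lemma hrel_inj:
  assumes A: "is_essp A" and v: "valid A \<theta> \<phi> \<psi>"
    and h1: "(e1,e) \<in> hrel A \<theta> \<phi> \<psi>" and h2: "(e2,e) \<in> hrel A \<theta> \<phi> \<psi>"
  shows "e1 = e2"
proof -
  obtain a b a' b' where m: "(a,b) \<in> \<theta>" "(a,a') \<in> \<phi>" "(b,b') \<in> \<psi>"
      "e1 = ((a,b), pr A \<theta> a)" "e = ((a',b'), pr A (conj3 \<phi> \<theta> \<psi>) a')" using h1 unfolding hrel_mem by blast
  obtain c d c' d' where n: "(c,d) \<in> \<theta>" "(c,c') \<in> \<phi>" "(d,d') \<in> \<psi>"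
      "e2 = ((c,d), pr A \<theta> c)" "e = ((c',d'), pr A (conj3 \<phi> \<theta> \<psi>) c')" using h2 unfolding hrel_mem by blast
  have "c' = a'" "d' = b'" using m(5) n(5) by auto
  hence "c = a" "d = b" using sym_inj[OF A valid_D(2)[OF v]] sym_inj[OF A valid_D(3)[OF v]] m n by blast+
  thus ?thesis using m(4) n(4) by simp
qed

lemma hrel_bij:
  assumes A: "is_essp A" and v: "valid A \<theta> \<phi> \<psi>"
  shows "bij_rel (hrel A \<theta> \<phi> \<psi>) (primes A \<theta>) (primes A (conj3 \<phi> \<theta> \<psi>))"
  unfolding bij_rel_def
proof (intro conjI ballI)
  show "hrel A \<theta> \<phi> \<psi> \<subseteq> primes A \<theta> \<times> primes A (conj3 \<phi> \<theta> \<psi>)"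
    using hrel_dom[OF v] hrel_ran[of A \<theta> \<phi> \<psi>] by auto
  fix e assume "e \<in> primes A \<theta>"
  then obtain e' where "(e,e') \<in> hrel A \<theta> \<phi> \<psi>" using hrel_dom[OF v] by blast
  thus "\<exists>!e'. (e,e') \<in> hrel A \<theta> \<phi> \<psi>" using hrel_fun[OF A v] by blast
next
  fix e' assume "e' \<in> primes A (conj3 \<phi> \<theta> \<psi>)"
  then obtain e where "(e,e') \<in> hrel A \<theta> \<phi> \<psi>" using hrel_ran[of A \<theta> \<phi> \<psi>] by blast
  thus "\<exists>!e. (e,e') \<in> hrel A \<theta> \<phi> \<psi>" using hrel_inj[OF A v] by blast
qed



lemma conj3_id:
  "\<theta> \<subseteq> Domain \<theta> \<times> Range \<theta> \<Longrightarrow> conj3 (Id_on (Domain \<theta>)) \<theta> (Id_on (Range \<theta>)) = \<theta>"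
  unfolding conj3_def by auto

lemma iso_id:
  fixes A :: "'a essp"
  assumes A: "is_essp A" and th: "\<theta> \<in> es_sym A"
  shows "Id_on (primes A \<theta>) \<in> hsym A"
proof -
  have v: "valid A \<theta> (Id_on (Domain \<theta>)) (Id_on (Range \<theta>))" unfolding valid_def
    using th sym_id[OF A sym_domc[OF A th]] sym_id[OF A sym_ranc[OF A th]] by auto
  have c: "conj3 (Id_on (Domain \<theta>)) \<theta> (Id_on (Range \<theta>)) = \<theta>" by (rule conj3_id) auto
  have "hrel A \<theta> (Id_on (Domain \<theta>)) (Id_on (Range \<theta>)) = Id_on (primes A \<theta>)"
    unfolding hrel_def c primes_def by auto
  thus ?thesis using H2[OF A v] by simp
qed

lemma iso_inv:
  fixes A :: "'a essp"
  assumes A: "is_essp A" and v: "valid A \<theta> \<phi> \<psi>"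
  shows "(hrel A \<theta> \<phi> \<psi>)\<inverse> = hrel A (conj3 \<phi> \<theta> \<psi>) (\<phi>\<inverse>) (\<psi>\<inverse>)" "valid A (conj3 \<phi> \<theta> \<psi>) (\<phi>\<inverse>) (\<psi>\<inverse>)"
proof -
  note vd = valid_D[OF v]
  note cs = conj3_sym[OF A v]
  show v2: "valid A (conj3 \<phi> \<theta> \<psi>) (\<phi>\<inverse>) (\<psi>\<inverse>)" unfolding valid_def
    using cs sym_conv[OF A vd(2)] sym_conv[OF A vd(3)] by auto
  have cc: "conj3 (\<phi>\<inverse>) (conj3 \<phi> \<theta> \<psi>) (\<psi>\<inverse>) = \<theta>"
  proof
    show "conj3 (\<phi>\<inverse>) (conj3 \<phi> \<theta> \<psi>) (\<psi>\<inverse>) \<subseteq> \<theta>"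
    proof
      fix p assume p: "p \<in> conj3 (\<phi>\<inverse>) (conj3 \<phi> \<theta> \<psi>) (\<psi>\<inverse>)"
      obtain x y where p': "p = (x,y)" by (rule prod.exhaust)
      obtain x' y' where "(x,x') \<in> \<phi>" "(x',y') \<in> conj3 \<phi> \<theta> \<psi>" "(y,y') \<in> \<psi>"
        using p unfolding p' conj3_def by blast
      moreover then obtain a b where "(a,x') \<in> \<phi>" "(a,b) \<in> \<theta>" "(b,y') \<in> \<psi>" unfolding conj3_mem by blast
      ultimately have "a = x" "b = y" using sym_inj[OF A vd(2)] sym_inj[OF A vd(3)] by blast+
      thus "p \<in> \<theta>" using p' \<open>(a,b) \<in> \<theta>\<close> by simp
    qed
    show "\<theta> \<subseteq> conj3 (\<phi>\<inverse>) (conj3 \<phi> \<theta> \<psi>) (\<psi>\<inverse>)"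
    proof
      fix p assume p: "p \<in> \<theta>"
      obtain x y where p': "p = (x,y)" by (rule prod.exhaust)
      obtain x' where x': "(x,x') \<in> \<phi>" using p p' vd(4) by blast
      obtain y' where y': "(y,y') \<in> \<psi>" using p p' vd(5) by blast
      have "(x',y') \<in> conj3 \<phi> \<theta> \<psi>" unfolding conj3_mem using x' y' p p' by blast
      thus "p \<in> conj3 (\<phi>\<inverse>) (conj3 \<phi> \<theta> \<psi>) (\<psi>\<inverse>)" unfolding p' conj3_def using x' y' by blast
    qed
  qed
  show "(hrel A \<theta> \<phi> \<psi>)\<inverse> = hrel A (conj3 \<phi> \<theta> \<psi>) (\<phi>\<inverse>) (\<psi>\<inverse>)"
  proof
    show "(hrel A \<theta> \<phi> \<psi>)\<inverse> \<subseteq> hrel A (conj3 \<phi> \<theta> \<psi>) (\<phi>\<inverse>) (\<psi>\<inverse>)"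
    proof
      fix q assume q: "q \<in> (hrel A \<theta> \<phi> \<psi>)\<inverse>"
      obtain e' e where q': "q = (e',e)" by (rule prod.exhaust)
      obtain a b a' b' where m: "(a,b) \<in> \<theta>" "(a,a') \<in> \<phi>" "(b,b') \<in> \<psi>"
        "e = ((a,b), pr A \<theta> a)" "e' = ((a',b'), pr A (conj3 \<phi> \<theta> \<psi>) a')"
        using q unfolding q' converse_iff hrel_mem by blast
      have "(a',b') \<in> conj3 \<phi> \<theta> \<psi>" unfolding conj3_mem using m by blast
      thus "q \<in> hrel A (conj3 \<phi> \<theta> \<psi>) (\<phi>\<inverse>) (\<psi>\<inverse>)" unfolding q' hrel_mem cc using m by blast
    qed
    show "hrel A (conj3 \<phi> \<theta> \<psi>) (\<phi>\<inverse>) (\<psi>\<inverse>) \<subseteq> (hrel A \<theta> \<phi> \<psi>)\<inverse>"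
    proof
      fix q assume q: "q \<in> hrel A (conj3 \<phi> \<theta> \<psi>) (\<phi>\<inverse>) (\<psi>\<inverse>)"
      obtain e' e where q': "q = (e',e)" by (rule prod.exhaust)
      obtain a' b' a b where m: "(a',b') \<in> conj3 \<phi> \<theta> \<psi>" "(a',a) \<in> \<phi>\<inverse>" "(b',b) \<in> \<psi>\<inverse>"
        "e' = ((a',b'), pr A (conj3 \<phi> \<theta> \<psi>) a')" "e = ((a,b), pr A \<theta> a)"
        using q unfolding q' hrel_mem cc by blast
      obtain x y where n: "(x,a') \<in> \<phi>" "(x,y) \<in> \<theta>" "(y,b') \<in> \<psi>" using m(1) unfolding conj3_mem by blast
      have "x = a" "y = b" using sym_inj[OF A vd(2)] sym_inj[OF A vd(3)] m(2,3) n by auto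
      thus "q \<in> (hrel A \<theta> \<phi> \<psi>)\<inverse>" unfolding q' converse_iff hrel_mem using m n by blast
    qed
  qed
qed

lemma iso_comp:
  fixes A :: "'a essp"
  assumes A: "is_essp A" and v: "valid A \<theta> \<phi> \<psi>" and v2: "valid A (conj3 \<phi> \<theta> \<psi>) \<phi>2 \<psi>2"
  shows "hrel A \<theta> \<phi> \<psi> O hrel A (conj3 \<phi> \<theta> \<psi>) \<phi>2 \<psi>2 = hrel A \<theta> (\<phi> O \<phi>2) (\<psi> O \<psi>2)"
    "valid A \<theta> (\<phi> O \<phi>2) (\<psi> O \<psi>2)"
proof -
  note vd = valid_D[OF v] and vd2 = valid_D[OF v2]
  note cs = conj3_sym[OF A v]
  have r1: "Range \<phi> = Domain \<phi>2" using cs(2) vd2(4) by simp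
  have r2: "Range \<psi> = Domain \<psi>2" using cs(3) vd2(5) by simp
  show v3: "valid A \<theta> (\<phi> O \<phi>2) (\<psi> O \<psi>2)" unfolding valid_def
    using vd sym_comp[OF A vd(2) vd2(2) r1] sym_comp[OF A vd(3) vd2(3) r2] r1 r2
    by (auto, blast+)
  have cc: "conj3 (\<phi> O \<phi>2) \<theta> (\<psi> O \<psi>2) = conj3 \<phi>2 (conj3 \<phi> \<theta> \<psi>) \<psi>2"
    unfolding conj3_def by (simp add: converse_relcomp O_assoc)
  show "hrel A \<theta> \<phi> \<psi> O hrel A (conj3 \<phi> \<theta> \<psi>) \<phi>2 \<psi>2 = hrel A \<theta> (\<phi> O \<phi>2) (\<psi> O \<psi>2)"
  proof
    show "hrel A \<theta> \<phi> \<psi> O hrel A (conj3 \<phi> \<theta> \<psi>) \<phi>2 \<psi>2 \<subseteq> hrel A \<theta> (\<phi> O \<phi>2) (\<psi> O \<psi>2)"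
    proof
      fix q assume q: "q \<in> hrel A \<theta> \<phi> \<psi> O hrel A (conj3 \<phi> \<theta> \<psi>) \<phi>2 \<psi>2"
      obtain e e'' where q': "q = (e,e'')" by (rule prod.exhaust)
      obtain e' where h1: "(e,e') \<in> hrel A \<theta> \<phi> \<psi>" and h2: "(e',e'') \<in> hrel A (conj3 \<phi> \<theta> \<psi>) \<phi>2 \<psi>2"
        using q q' by blast
      obtain a b a' b' where m: "(a,b) \<in> \<theta>" "(a,a') \<in> \<phi>" "(b,b') \<in> \<psi>"
        "e = ((a,b), pr A \<theta> a)" "e' = ((a',b'), pr A (conj3 \<phi> \<theta> \<psi>) a')" using h1 unfolding hrel_mem by blast
      obtain c d c' d' where n: "(c,c') \<in> \<phi>2" "(d,d') \<in> \<psi>2"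
        "e' = ((c,d), pr A (conj3 \<phi> \<theta> \<psi>) c)" "e'' = ((c',d'), pr A (conj3 \<phi>2 (conj3 \<phi> \<theta> \<psi>) \<psi>2) c')"
        using h2 unfolding hrel_mem by blast
      have "c = a'" "d = b'" using m(5) n(3) by auto
      thus "q \<in> hrel A \<theta> (\<phi> O \<phi>2) (\<psi> O \<psi>2)" unfolding q' hrel_mem cc using m n by blast
    qed
    show "hrel A \<theta> (\<phi> O \<phi>2) (\<psi> O \<psi>2) \<subseteq> hrel A \<theta> \<phi> \<psi> O hrel A (conj3 \<phi> \<theta> \<psi>) \<phi>2 \<psi>2"
    proof
      fix q assume q: "q \<in> hrel A \<theta> (\<phi> O \<phi>2) (\<psi> O \<psi>2)"
      obtain e e'' where q': "q = (e,e'')" by (rule prod.exhaust)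
      obtain a b a'' b'' where m: "(a,b) \<in> \<theta>" "(a,a'') \<in> \<phi> O \<phi>2" "(b,b'') \<in> \<psi> O \<psi>2"
        "e = ((a,b), pr A \<theta> a)" "e'' = ((a'',b''), pr A (conj3 \<phi>2 (conj3 \<phi> \<theta> \<psi>) \<psi>2) a'')"
        using q unfolding q' hrel_mem cc by blast
      obtain a' where a': "(a,a') \<in> \<phi>" "(a',a'') \<in> \<phi>2" using m(2) by blast
      obtain b' where b': "(b,b') \<in> \<psi>" "(b',b'') \<in> \<psi>2" using m(3) by blast
      have "(a',b') \<in> conj3 \<phi> \<theta> \<psi>" unfolding conj3_mem using a' b' m(1) by blast
      define e' where "e' = ((a',b'), pr A (conj3 \<phi> \<theta> \<psi>) a')"
      have "(e,e') \<in> hrel A \<theta> \<phi> \<psi>" unfolding hrel_mem e'_def using m a' b' by blast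
      moreover have "(e',e'') \<in> hrel A (conj3 \<phi> \<theta> \<psi>) \<phi>2 \<psi>2" unfolding hrel_mem e'_def
        using m(5) a' b' \<open>(a',b') \<in> conj3 \<phi> \<theta> \<psi>\<close> by blast
      ultimately show "q \<in> hrel A \<theta> \<phi> \<psi> O hrel A (conj3 \<phi> \<theta> \<psi>) \<phi>2 \<psi>2" unfolding q' by blast
    qed
  qed
qed



lemma primes_mono: "primes A \<theta>0 \<subseteq> primes A \<theta> \<Longrightarrow> \<theta>0 \<subseteq> \<theta>"
  by (metis fst_primes image_mono)

lemma dom_restr: "S \<subseteq> Domain r \<Longrightarrow> Domain (r \<inter> (S \<times> UNIV)) = S"
  by blast

lemma iso_restr:
  fixes A :: "'a essp"
  assumes A: "is_essp A" and v: "valid A \<theta> \<phi> \<psi>" and th0: "\<theta>0 \<in> es_sym A" and sub: "\<theta>0 \<subseteq> \<theta>"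
  shows "hrel A \<theta> \<phi> \<psi> \<inter> (primes A \<theta>0 \<times> UNIV) \<in> hsym A"
proof -
  note vd = valid_D[OF v]
  define \<phi>0 where "\<phi>0 = \<phi> \<inter> (Domain \<theta>0 \<times> UNIV)"
  define \<psi>0 where "\<psi>0 = \<psi> \<inter> (Range \<theta>0 \<times> UNIV)"
  have s1: "Domain \<theta>0 \<subseteq> Domain \<phi>" using sub vd(4) by blast
  have s2: "Range \<theta>0 \<subseteq> Domain \<psi>" using sub vd(5) by blast
  have p0: "\<phi>0 \<in> es_sym A" unfolding \<phi>0_def using sym_restr[OF A vd(2) sym_domc[OF A th0] s1] .
  have q0: "\<psi>0 \<in> es_sym A" unfolding \<psi>0_def using sym_restr[OF A vd(3) sym_ranc[OF A th0] s2] .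
  have v0: "valid A \<theta>0 \<phi>0 \<psi>0" unfolding valid_def
    using th0 p0 q0 dom_restr[OF s1] dom_restr[OF s2] unfolding \<phi>0_def \<psi>0_def by auto
  have sp: "\<phi>0 \<subseteq> \<phi>" "\<psi>0 \<subseteq> \<psi>" unfolding \<phi>0_def \<psi>0_def by auto
  have eq: "hrel A \<theta> \<phi> \<psi> \<inter> (primes A \<theta>0 \<times> UNIV) = hrel A \<theta>0 \<phi>0 \<psi>0"
  proof
    show "hrel A \<theta> \<phi> \<psi> \<inter> (primes A \<theta>0 \<times> UNIV) \<subseteq> hrel A \<theta>0 \<phi>0 \<psi>0"
    proof
      fix q assume q: "q \<in> hrel A \<theta> \<phi> \<psi> \<inter> (primes A \<theta>0 \<times> UNIV)"
      obtain e e' where q': "q = (e,e')" by (rule prod.exhaust)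
      obtain a b a' b' where m: "(a,b) \<in> \<theta>" "(a,a') \<in> \<phi>" "(b,b') \<in> \<psi>"
        "e = ((a,b), pr A \<theta> a)" "e' = ((a',b'), pr A (conj3 \<phi> \<theta> \<psi>) a')"
        using q unfolding q' by (auto simp: hrel_mem)
      have "e \<in> primes A \<theta>0" using q q' by auto
      then obtain c d where n: "(c,d) \<in> \<theta>0" "e = ((c,d), pr A \<theta>0 c)" unfolding primes_mem by blast
      have cd: "c = a" "d = b" using m(4) n(2) by auto
      have m2: "(a,a') \<in> \<phi>0" "(b,b') \<in> \<psi>0" unfolding \<phi>0_def \<psi>0_def using m n cd by auto
      have "(a',b') \<in> conj3 \<phi>0 \<theta>0 \<psi>0" unfolding conj3_mem using m2 n(1) cd by blast
      hence "pr A (conj3 \<phi>0 \<theta>0 \<psi>0) a' = pr A (conj3 \<phi> \<theta> \<psi>) a'"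
        using pr_conj3_eq[OF A v0 v sp(1) sub sp(2)] by blast
      thus "q \<in> hrel A \<theta>0 \<phi>0 \<psi>0" unfolding q' hrel_mem using m2 n cd m(5) by auto
    qed
    show "hrel A \<theta>0 \<phi>0 \<psi>0 \<subseteq> hrel A \<theta> \<phi> \<psi> \<inter> (primes A \<theta>0 \<times> UNIV)"
    proof
      fix q assume q: "q \<in> hrel A \<theta>0 \<phi>0 \<psi>0"
      obtain e e' where q': "q = (e,e')" by (rule prod.exhaust)
      obtain a b a' b' where m: "(a,b) \<in> \<theta>0" "(a,a') \<in> \<phi>0" "(b,b') \<in> \<psi>0"
        "e = ((a,b), pr A \<theta>0 a)" "e' = ((a',b'), pr A (conj3 \<phi>0 \<theta>0 \<psi>0) a')"
        using q unfolding q' hrel_mem by blast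
      have "(a',b') \<in> conj3 \<phi>0 \<theta>0 \<psi>0" unfolding conj3_mem using m by blast
      hence e1: "pr A (conj3 \<phi>0 \<theta>0 \<psi>0) a' = pr A (conj3 \<phi> \<theta> \<psi>) a'"
        using pr_conj3_eq[OF A v0 v sp(1) sub sp(2)] by blast
      have e2: "pr A \<theta>0 a = pr A \<theta> a" using pr_eq[OF A th0 vd(1) sub] m(1) by blast
      have "e \<in> primes A \<theta>0" using m(1,4) primes_I by metis
      moreover have "(e,e') \<in> hrel A \<theta> \<phi> \<psi>" unfolding hrel_mem
        using m e1 e2 sub sp by blast
      ultimately show "q \<in> hrel A \<theta> \<phi> \<psi> \<inter> (primes A \<theta>0 \<times> UNIV)" unfolding q' by blast
    qed
  qed
  show ?thesis unfolding eq using H2[OF A v0] .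
qed

lemma iso_ext:
  fixes A :: "'a essp"
  assumes A: "is_essp A" and v: "valid A \<theta> \<phi> \<psi>" and th2: "\<theta>2 \<in> es_sym A" and sub: "\<theta> \<subseteq> \<theta>2"
  shows "\<exists>\<Phi>\<in>hsym A. hrel A \<theta> \<phi> \<psi> \<subseteq> \<Phi> \<and> Domain \<Phi> = primes A \<theta>2"
proof -
  note vd = valid_D[OF v]
  have s1: "Domain \<phi> \<subseteq> Domain \<theta>2" using sub vd(4) by auto
  have s2: "Domain \<psi> \<subseteq> Range \<theta>2" using sub vd(5) by auto
  obtain \<phi>2 where p2: "\<phi>2 \<in> es_sym A" "\<phi> \<subseteq> \<phi>2" "Domain \<phi>2 = Domain \<theta>2"
    using sym_ext[OF A vd(2) sym_domc[OF A th2] s1] by blast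
  obtain \<psi>2 where q2: "\<psi>2 \<in> es_sym A" "\<psi> \<subseteq> \<psi>2" "Domain \<psi>2 = Range \<theta>2"
    using sym_ext[OF A vd(3) sym_ranc[OF A th2] s2] by blast
  have v2: "valid A \<theta>2 \<phi>2 \<psi>2" unfolding valid_def using th2 p2 q2 by auto
  have "hrel A \<theta> \<phi> \<psi> \<subseteq> hrel A \<theta>2 \<phi>2 \<psi>2"
  proof
    fix q assume q: "q \<in> hrel A \<theta> \<phi> \<psi>"
    obtain e e' where q': "q = (e,e')" by (rule prod.exhaust)
    obtain a b a' b' where m: "(a,b) \<in> \<theta>" "(a,a') \<in> \<phi>" "(b,b') \<in> \<psi>"
      "e = ((a,b), pr A \<theta> a)" "e' = ((a',b'), pr A (conj3 \<phi> \<theta> \<psi>) a')"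
      using q unfolding q' hrel_mem by blast
    have "(a',b') \<in> conj3 \<phi> \<theta> \<psi>" unfolding conj3_mem using m by blast
    hence e1: "pr A (conj3 \<phi> \<theta> \<psi>) a' = pr A (conj3 \<phi>2 \<theta>2 \<psi>2) a'"
      using pr_conj3_eq[OF A v v2 p2(2) sub q2(2)] by blast
    have e2: "pr A \<theta> a = pr A \<theta>2 a" using pr_eq[OF A vd(1) th2 sub] m(1) by blast
    show "q \<in> hrel A \<theta>2 \<phi>2 \<psi>2" unfolding q' hrel_mem using m e1 e2 sub p2(2) q2(2) by blast
  qed
  moreover have "Domain (hrel A \<theta>2 \<phi>2 \<psi>2) = primes A \<theta>2" using hrel_dom[OF v2] .
  ultimately show ?thesis using H2[OF A v2] by blast
qed

lemma pol_hsym: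
  fixes A :: "'a essp"
  assumes A: "is_essp A" and v: "valid A \<theta> \<phi> \<psi>" and q: "(e,e') \<in> hrel A \<theta> \<phi> \<psi>"
  shows "es_pol A (fst (fst e)) = es_pol A (fst (fst e'))"
proof -
  obtain a b a' b' where m: "(a,a') \<in> \<phi>"
    "e = ((a,b), pr A \<theta> a)" "e' = ((a',b'), pr A (conj3 \<phi> \<theta> \<psi>) a')"
    using q unfolding hrel_mem by blast
  thus ?thesis using sym_pol[OF A valid_D(2)[OF v] m(1)] by simp
qed

lemma conf_tilde_primes:
  fixes A :: "'a essp"
  assumes A: "is_essp A" and X: "conf (tilde A) X"
  obtains \<theta> where "\<theta> \<in> es_sym A" "X = primes A \<theta>"
  using T2'[OF A] X unfolding conf_tilde by blast

lemma hsym_E: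
  fixes A :: "'a essp"
  assumes A: "is_essp A" and P: "\<Phi> \<in> es_sym (tilde A)"
  obtains \<theta> \<phi> \<psi> where "valid A \<theta> \<phi> \<psi>" "\<Phi> = hrel A \<theta> \<phi> \<psi>"
  using H1[OF A, of \<Phi>] P by auto

lemma is_essp_tilde:
  fixes A :: "'a essp"
  assumes A: "is_essp A"
  shows "is_essp (tilde A)"
proof -
  have i1: "\<forall>\<Phi>\<in>es_sym (tilde A). \<exists>x y. conf (tilde A) x \<and> conf (tilde A) y \<and> bij_rel \<Phi> x y"
  proof
    fix \<Phi> assume "\<Phi> \<in> es_sym (tilde A)"
    then obtain \<theta> \<phi> \<psi> where v: "valid A \<theta> \<phi> \<psi>" and P: "\<Phi> = hrel A \<theta> \<phi> \<psi>" using hsym_E[OF A] by metis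
    have "conf (tilde A) (primes A \<theta>)" unfolding conf_tilde using T1[OF A valid_D(1)[OF v]] .
    moreover have "conf (tilde A) (primes A (conj3 \<phi> \<theta> \<psi>))" unfolding conf_tilde using T1[OF A conj3_sym(1)[OF A v]] .
    ultimately show "\<exists>x y. conf (tilde A) x \<and> conf (tilde A) y \<and> bij_rel \<Phi> x y" using hrel_bij[OF A v] P by blast
  qed
  have i2: "\<forall>x. conf (tilde A) x \<longrightarrow> Id_on x \<in> es_sym (tilde A)"
  proof (intro allI impI)
    fix X assume "conf (tilde A) X"
    then obtain \<theta> where "\<theta> \<in> es_sym A" "X = primes A \<theta>" using conf_tilde_primes[OF A] by blast
    thus "Id_on X \<in> es_sym (tilde A)" using iso_id[OF A] by simp
  qed
  have i3: "\<forall>\<Phi>\<in>es_sym (tilde A). \<Phi>\<inverse> \<in> es_sym (tilde A)"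
  proof
    fix \<Phi> assume "\<Phi> \<in> es_sym (tilde A)"
    then obtain \<theta> \<phi> \<psi> where v: "valid A \<theta> \<phi> \<psi>" and P: "\<Phi> = hrel A \<theta> \<phi> \<psi>" using hsym_E[OF A] by metis
    show "\<Phi>\<inverse> \<in> es_sym (tilde A)" using iso_inv[OF A v] H2[OF A] P by simp
  qed
  have i4: "\<forall>\<Phi>\<in>es_sym (tilde A). \<forall>\<Psi>\<in>es_sym (tilde A). Range \<Phi> = Domain \<Psi> \<longrightarrow> \<Phi> O \<Psi> \<in> es_sym (tilde A)"
  proof (intro ballI impI)
    fix \<Phi> \<Psi> assume "\<Phi> \<in> es_sym (tilde A)" "\<Psi> \<in> es_sym (tilde A)" and r: "Range \<Phi> = Domain \<Psi>"
    obtain \<theta> \<phi> \<psi> where v: "valid A \<theta> \<phi> \<psi>" and P: "\<Phi> = hrel A \<theta> \<phi> \<psi>" using hsym_E[OF A \<open>\<Phi> \<in> _\<close>] by metis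
    obtain \<theta>2 \<phi>2 \<psi>2 where v2: "valid A \<theta>2 \<phi>2 \<psi>2" and Q: "\<Psi> = hrel A \<theta>2 \<phi>2 \<psi>2" using hsym_E[OF A \<open>\<Psi> \<in> _\<close>] by metis
    have "primes A (conj3 \<phi> \<theta> \<psi>) = primes A \<theta>2" using r P Q hrel_ran hrel_dom[OF v2] by metis
    hence t2: "\<theta>2 = conj3 \<phi> \<theta> \<psi>" using primes_inj by metis
    show "\<Phi> O \<Psi> \<in> es_sym (tilde A)" using iso_comp[OF A v v2[unfolded t2]] H2[OF A] P Q t2 by simp
  qed
  have i5: "\<forall>\<Phi>\<in>es_sym (tilde A). \<forall>x'. conf (tilde A) x' \<and> x' \<subseteq> Domain \<Phi> \<longrightarrow> \<Phi> \<inter> (x' \<times> UNIV) \<in> es_sym (tilde A)"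
  proof (intro ballI allI impI)
    fix \<Phi> X assume "\<Phi> \<in> es_sym (tilde A)" and X: "conf (tilde A) X \<and> X \<subseteq> Domain \<Phi>"
    obtain \<theta> \<phi> \<psi> where v: "valid A \<theta> \<phi> \<psi>" and P: "\<Phi> = hrel A \<theta> \<phi> \<psi>" using hsym_E[OF A \<open>\<Phi> \<in> _\<close>] by metis
    obtain \<theta>0 where t0: "\<theta>0 \<in> es_sym A" "X = primes A \<theta>0" using conf_tilde_primes[OF A] X by blast
    have "\<theta>0 \<subseteq> \<theta>" using X t0(2) hrel_dom[OF v] P primes_mono by metis
    thus "\<Phi> \<inter> (X \<times> UNIV) \<in> es_sym (tilde A)" using iso_restr[OF A v t0(1)] P t0(2) by simp
  qed
  have i6: "\<forall>\<Phi>\<in>es_sym (tilde A). \<forall>x'. conf (tilde A) x' \<and> Domain \<Phi> \<subseteq> x' \<longrightarrow>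
         (\<exists>\<Phi>'\<in>es_sym (tilde A). \<Phi> \<subseteq> \<Phi>' \<and> Domain \<Phi>' = x')"
  proof (intro ballI allI impI)
    fix \<Phi> X assume "\<Phi> \<in> es_sym (tilde A)" and X: "conf (tilde A) X \<and> Domain \<Phi> \<subseteq> X"
    obtain \<theta> \<phi> \<psi> where v: "valid A \<theta> \<phi> \<psi>" and P: "\<Phi> = hrel A \<theta> \<phi> \<psi>" using hsym_E[OF A \<open>\<Phi> \<in> _\<close>] by metis
    obtain \<theta>2 where t2: "\<theta>2 \<in> es_sym A" "X = primes A \<theta>2" using conf_tilde_primes[OF A] X by blast
    have "\<theta> \<subseteq> \<theta>2" using X t2(2) hrel_dom[OF v] P primes_mono by metis
    thus "\<exists>\<Phi>'\<in>es_sym (tilde A). \<Phi> \<subseteq> \<Phi>' \<and> Domain \<Phi>' = X" using iso_ext[OF A v t2(1)] P t2(2) by simp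
  qed
  have i7: "\<forall>\<Phi>\<in>es_sym (tilde A). \<forall>(e, e')\<in>\<Phi>. es_pol (tilde A) e = es_pol (tilde A) e'"
  proof (intro ballI)
    fix \<Phi> q assume "\<Phi> \<in> es_sym (tilde A)" "q \<in> \<Phi>"
    obtain \<theta> \<phi> \<psi> where v: "valid A \<theta> \<phi> \<psi>" and P: "\<Phi> = hrel A \<theta> \<phi> \<psi>" using hsym_E[OF A \<open>\<Phi> \<in> _\<close>] by metis
    obtain e e' where q': "q = (e,e')" by (rule prod.exhaust)
    show "case q of (e, e') \<Rightarrow> es_pol (tilde A) e = es_pol (tilde A) e'"
      using pol_hsym[OF A v] \<open>q \<in> \<Phi>\<close> P q' by simp
  qed
  show ?thesis unfolding is_essp_def iso_family_def
    using is_es_tilde[OF A] i1 i2 i3 i4 i5 i6 i7 by blast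
qed



lemma act_mem: "(c,d) \<in> act \<sigma> \<theta> \<longleftrightarrow> (\<exists>a b. (a,b) \<in> \<theta> \<and> c = \<sigma> a \<and> d = \<sigma> b)"
  unfolding act_def by force

lemma act_dom: "Domain (act \<sigma> \<theta>) = \<sigma> ` Domain \<theta>"
  unfolding act_def by force
lemma act_ran: "Range (act \<sigma> \<theta>) = \<sigma> ` Range \<theta>"
  unfolding act_def by force
lemma act_mono: "\<theta> \<subseteq> \<theta>' \<Longrightarrow> act \<sigma> \<theta> \<subseteq> act \<sigma> \<theta>'"
  unfolding act_def by blast
lemma act_insert: "act \<sigma> (insert (a,b) \<theta>) = insert (\<sigma> a, \<sigma> b) (act \<sigma> \<theta>)"
  unfolding act_def by simp

locale mp =
  fixes S :: "'a essp" and A :: "'b essp" and \<sigma> :: "'a \<Rightarrow> 'b"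
  assumes m: "essp_map S A \<sigma>"
begin

lemma S: "is_essp S" using m unfolding essp_map_def by simp
lemma A: "is_essp A" using m unfolding essp_map_def by simp
lemma em: "es_map S A \<sigma>" using m unfolding essp_map_def by simp
lemma act_sym: "\<theta> \<in> es_sym S \<Longrightarrow> act \<sigma> \<theta> \<in> es_sym A" using m unfolding essp_map_def by blast
lemma conf_img: "conf S x \<Longrightarrow> conf A (\<sigma> ` x)" using em unfolding es_map_def by blast
lemma conf_inj: "conf S x \<Longrightarrow> inj_on \<sigma> x" using em unfolding es_map_def by blast
lemma ev_img: "a \<in> es_ev S \<Longrightarrow> \<sigma> a \<in> es_ev A" using em unfolding es_map_def by blast
lemma pol_pres: "a \<in> es_ev S \<Longrightarrow> es_pol A (\<sigma> a) = es_pol S a" using em unfolding es_map_def by blast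

lemma inj_dom: "\<theta> \<in> es_sym S \<Longrightarrow> a \<in> Domain \<theta> \<Longrightarrow> c \<in> Domain \<theta> \<Longrightarrow> \<sigma> a = \<sigma> c \<Longrightarrow> a = c"
  using conf_inj[OF sym_domc[OF S]] unfolding inj_on_def by blast
lemma inj_ran: "\<theta> \<in> es_sym S \<Longrightarrow> a \<in> Range \<theta> \<Longrightarrow> c \<in> Range \<theta> \<Longrightarrow> \<sigma> a = \<sigma> c \<Longrightarrow> a = c"
  using conf_inj[OF sym_ranc[OF S]] unfolding inj_on_def by blast

lemma K:
  assumes th: "\<theta> \<in> es_sym S" and ab: "(a,b) \<in> \<theta>"
  shows "tmap A \<sigma> ((a,b), pr S \<theta> a) = ((\<sigma> a, \<sigma> b), pr A (act \<sigma> \<theta>) (\<sigma> a))"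
proof -
  have "{(c, d) \<in> act \<sigma> (pr S \<theta> a). es_le A c (\<sigma> a)} = pr A (act \<sigma> \<theta>) (\<sigma> a)"
  proof
    show "{(c, d) \<in> act \<sigma> (pr S \<theta> a). es_le A c (\<sigma> a)} \<subseteq> pr A (act \<sigma> \<theta>) (\<sigma> a)"
      using act_mono[OF pr_sub, of \<sigma> S \<theta> a] by (auto simp: pr_def[of A])
    show "pr A (act \<sigma> \<theta>) (\<sigma> a) \<subseteq> {(c, d) \<in> act \<sigma> (pr S \<theta> a). es_le A c (\<sigma> a)}"
    proof
      fix p assume p: "p \<in> pr A (act \<sigma> \<theta>) (\<sigma> a)"
      obtain c d where p': "p = (c,d)" by (rule prod.exhaust)
      have cd: "(c,d) \<in> act \<sigma> \<theta>" "es_le A c (\<sigma> a)" using p p' unfolding pr_def by auto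
      obtain a0 b0 where ab0: "(a0,b0) \<in> \<theta>" "c = \<sigma> a0" "d = \<sigma> b0" using cd(1) unfolding act_mem by blast
      have aD: "a \<in> Domain \<theta>" using ab by blast
      have cdn: "conf S (dn S a)" using conf_dn[OF essp_es[OF S] sym_domc[OF S th] aD] .
      have "a \<in> dn S a" using dn_self[OF essp_es[OF S]] conf_ev[OF sym_domc[OF S th]] aD by blast
      hence "\<sigma> a \<in> \<sigma> ` dn S a" by blast
      hence "c \<in> \<sigma> ` dn S a" using conf_dc[OF conf_img[OF cdn]] cd(2) by blast
      then obtain a1 where a1: "a1 \<in> dn S a" "c = \<sigma> a1" by blast
      have "dn S a \<subseteq> Domain \<theta>" using dn_sub[OF sym_domc[OF S th] aD] .
      hence "a1 = a0" using inj_dom[OF th] a1 ab0 by blast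
      hence "(a0,b0) \<in> pr S \<theta> a" using a1(1) ab0(1) unfolding pr_def dn_def by simp
      thus "p \<in> {(c, d) \<in> act \<sigma> (pr S \<theta> a). es_le A c (\<sigma> a)}"
        using p' ab0 cd(2) unfolding act_mem by auto
    qed
  qed
  thus ?thesis unfolding tmap_def by simp
qed

lemma tmap_primes:
  assumes th: "\<theta> \<in> es_sym S"
  shows "tmap A \<sigma> ` primes S \<theta> = primes A (act \<sigma> \<theta>)"
proof
  show "tmap A \<sigma> ` primes S \<theta> \<subseteq> primes A (act \<sigma> \<theta>)"
  proof
    fix E assume "E \<in> tmap A \<sigma> ` primes S \<theta>"
    then obtain e where "e \<in> primes S \<theta>" "E = tmap A \<sigma> e" by blast
    then obtain a b where ab: "(a,b) \<in> \<theta>" "E = tmap A \<sigma> ((a,b), pr S \<theta> a)" unfolding primes_mem by blast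
    have "(\<sigma> a, \<sigma> b) \<in> act \<sigma> \<theta>" unfolding act_mem using ab by blast
    thus "E \<in> primes A (act \<sigma> \<theta>)" using K[OF th ab(1)] ab(2) primes_I by metis
  qed
  show "primes A (act \<sigma> \<theta>) \<subseteq> tmap A \<sigma> ` primes S \<theta>"
  proof
    fix E assume "E \<in> primes A (act \<sigma> \<theta>)"
    then obtain c d where cd: "(c,d) \<in> act \<sigma> \<theta>" "E = ((c,d), pr A (act \<sigma> \<theta>) c)" unfolding primes_mem by blast
    then obtain a b where ab: "(a,b) \<in> \<theta>" "c = \<sigma> a" "d = \<sigma> b" unfolding act_mem by blast
    have "E = tmap A \<sigma> ((a,b), pr S \<theta> a)" using K[OF th ab(1)] cd(2) ab by simp
    thus "E \<in> tmap A \<sigma> ` primes S \<theta>" using primes_I[OF ab(1)] by blast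
  qed
qed

lemma tmap_tev:
  assumes e: "e \<in> tev S"
  shows "tmap A \<sigma> e = ((\<sigma> (fst (fst e)), \<sigma> (snd (fst e))), pr A (act \<sigma> (snd e)) (\<sigma> (fst (fst e))))"
proof -
  have "e = ((fst (fst e), snd (fst e)), pr S (snd e) (fst (fst e)))" using tev_pr_eq[OF e] by simp
  moreover have "(fst (fst e), snd (fst e)) \<in> snd e" using tev_top[OF e] by simp
  ultimately show ?thesis using K[OF tev_sym[OF e]] by metis
qed

lemma act_conj3:
  assumes v: "valid S \<theta> \<phi> \<psi>"
  shows "act \<sigma> (conj3 \<phi> \<theta> \<psi>) = conj3 (act \<sigma> \<phi>) (act \<sigma> \<theta>) (act \<sigma> \<psi>)"
proof
  note vd = valid_D[OF v]
  show "act \<sigma> (conj3 \<phi> \<theta> \<psi>) \<subseteq> conj3 (act \<sigma> \<phi>) (act \<sigma> \<theta>) (act \<sigma> \<psi>)"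
    unfolding act_def conj3_def by blast
  show "conj3 (act \<sigma> \<phi>) (act \<sigma> \<theta>) (act \<sigma> \<psi>) \<subseteq> act \<sigma> (conj3 \<phi> \<theta> \<psi>)"
  proof
    fix p assume p: "p \<in> conj3 (act \<sigma> \<phi>) (act \<sigma> \<theta>) (act \<sigma> \<psi>)"
    obtain x y where p': "p = (x,y)" by (rule prod.exhaust)
    obtain u v where uv: "(u,x) \<in> act \<sigma> \<phi>" "(u,v) \<in> act \<sigma> \<theta>" "(v,y) \<in> act \<sigma> \<psi>"
      using p unfolding p' conj3_mem by blast
    obtain x1 x2 where x: "(x1,x2) \<in> \<phi>" "u = \<sigma> x1" "x = \<sigma> x2" using uv(1) unfolding act_mem by blast
    obtain y1 y2 where y: "(y1,y2) \<in> \<theta>" "u = \<sigma> y1" "v = \<sigma> y2" using uv(2) unfolding act_mem by blast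
    obtain z1 z2 where z: "(z1,z2) \<in> \<psi>" "v = \<sigma> z1" "y = \<sigma> z2" using uv(3) unfolding act_mem by blast
    have "x1 = y1" using inj_dom[OF vd(1), of x1 y1] x y vd(4) by blast
    moreover have "z1 = y2" using inj_ran[OF vd(1), of z1 y2] z y vd(5) by blast
    ultimately have "(x2,z2) \<in> conj3 \<phi> \<theta> \<psi>" unfolding conj3_mem using x y z by blast
    thus "p \<in> act \<sigma> (conj3 \<phi> \<theta> \<psi>)" unfolding p' act_mem using x z by blast
  qed
qed

lemma act_valid:
  assumes v: "valid S \<theta> \<phi> \<psi>"
  shows "valid A (act \<sigma> \<theta>) (act \<sigma> \<phi>) (act \<sigma> \<psi>)"
  using valid_D[OF v] act_sym unfolding valid_def act_dom act_ran by simp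

lemma act_hrel:
  assumes v: "valid S \<theta> \<phi> \<psi>"
  shows "act (tmap A \<sigma>) (hrel S \<theta> \<phi> \<psi>) = hrel A (act \<sigma> \<theta>) (act \<sigma> \<phi>) (act \<sigma> \<psi>)"
proof
  note vd = valid_D[OF v]
  note ac = act_conj3[OF v]
  have cs: "conj3 \<phi> \<theta> \<psi> \<in> es_sym S" using conj3_sym[OF S v] by simp
  show "act (tmap A \<sigma>) (hrel S \<theta> \<phi> \<psi>) \<subseteq> hrel A (act \<sigma> \<theta>) (act \<sigma> \<phi>) (act \<sigma> \<psi>)"
  proof
    fix q assume q: "q \<in> act (tmap A \<sigma>) (hrel S \<theta> \<phi> \<psi>)"
    obtain E E' where q': "q = (E,E')" by (rule prod.exhaust)
    obtain e e' where ee: "(e,e') \<in> hrel S \<theta> \<phi> \<psi>" "E = tmap A \<sigma> e" "E' = tmap A \<sigma> e'"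
      using q unfolding q' act_mem by blast
    obtain a b a' b' where m: "(a,b) \<in> \<theta>" "(a,a') \<in> \<phi>" "(b,b') \<in> \<psi>"
      "e = ((a,b), pr S \<theta> a)" "e' = ((a',b'), pr S (conj3 \<phi> \<theta> \<psi>) a')" using ee(1) unfolding hrel_mem by blast
    have ab': "(a',b') \<in> conj3 \<phi> \<theta> \<psi>" unfolding conj3_mem using m by blast
    have "E = ((\<sigma> a, \<sigma> b), pr A (act \<sigma> \<theta>) (\<sigma> a))" using K[OF vd(1) m(1)] ee(2) m(4) by simp
    moreover have "E' = ((\<sigma> a', \<sigma> b'), pr A (conj3 (act \<sigma> \<phi>) (act \<sigma> \<theta>) (act \<sigma> \<psi>)) (\<sigma> a'))"
      using K[OF cs ab'] ee(3) m(5) ac by simp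
    moreover have "(\<sigma> a, \<sigma> b) \<in> act \<sigma> \<theta>" "(\<sigma> a, \<sigma> a') \<in> act \<sigma> \<phi>" "(\<sigma> b, \<sigma> b') \<in> act \<sigma> \<psi>"
      unfolding act_mem using m by blast+
    ultimately show "q \<in> hrel A (act \<sigma> \<theta>) (act \<sigma> \<phi>) (act \<sigma> \<psi>)" unfolding q' hrel_mem by blast
  qed
  show "hrel A (act \<sigma> \<theta>) (act \<sigma> \<phi>) (act \<sigma> \<psi>) \<subseteq> act (tmap A \<sigma>) (hrel S \<theta> \<phi> \<psi>)"
  proof
    fix q assume q: "q \<in> hrel A (act \<sigma> \<theta>) (act \<sigma> \<phi>) (act \<sigma> \<psi>)"
    obtain E E' where q': "q = (E,E')" by (rule prod.exhaust)
    obtain c d c' d' where m: "(c,d) \<in> act \<sigma> \<theta>" "(c,c') \<in> act \<sigma> \<phi>" "(d,d') \<in> act \<sigma> \<psi>"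
      "E = ((c,d), pr A (act \<sigma> \<theta>) c)" "E' = ((c',d'), pr A (conj3 (act \<sigma> \<phi>) (act \<sigma> \<theta>) (act \<sigma> \<psi>)) c')"
      using q unfolding q' hrel_mem by blast
    obtain a b where ab: "(a,b) \<in> \<theta>" "c = \<sigma> a" "d = \<sigma> b" using m(1) unfolding act_mem by blast
    obtain x a' where xa: "(x,a') \<in> \<phi>" "c = \<sigma> x" "c' = \<sigma> a'" using m(2) unfolding act_mem by blast
    obtain y b' where yb: "(y,b') \<in> \<psi>" "d = \<sigma> y" "d' = \<sigma> b'" using m(3) unfolding act_mem by blast
    have "x = a" using inj_dom[OF vd(1), of x a] xa ab vd(4) by blast
    moreover have "y = b" using inj_ran[OF vd(1), of y b] yb ab vd(5) by blast
    ultimately have h: "(((a,b), pr S \<theta> a), ((a',b'), pr S (conj3 \<phi> \<theta> \<psi>) a')) \<in> hrel S \<theta> \<phi> \<psi>"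
      unfolding hrel_mem using ab xa yb by blast
    have ab': "(a',b') \<in> conj3 \<phi> \<theta> \<psi>" unfolding conj3_mem using ab xa yb \<open>x = a\<close> \<open>y = b\<close> by blast
    have "E = tmap A \<sigma> ((a,b), pr S \<theta> a)" using K[OF vd(1) ab(1)] m(4) ab by simp
    moreover have "E' = tmap A \<sigma> ((a',b'), pr S (conj3 \<phi> \<theta> \<psi>) a')" using K[OF cs ab'] m(5) xa yb ac by simp
    ultimately show "q \<in> act (tmap A \<sigma>) (hrel S \<theta> \<phi> \<psi>)" unfolding q' act_mem using h by blast
  qed
qed

lemma tmap_essp_map: "essp_map (tilde S) (tilde A) (tmap A \<sigma>)"
proof -
  have ev: "tmap A \<sigma> ` es_ev (tilde S) \<subseteq> es_ev (tilde A)"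
  proof
    fix E assume "E \<in> tmap A \<sigma> ` es_ev (tilde S)"
    then obtain e where e: "e \<in> tev S" "E = tmap A \<sigma> e" by auto
    have "E \<in> primes A (act \<sigma> (snd e))" using tev_in_primes[OF S e(1)] tmap_primes[OF tev_sym[OF e(1)]] e(2) by blast
    thus "E \<in> es_ev (tilde A)" using primes_tev[OF A act_sym[OF tev_sym[OF e(1)]]] by auto
  qed
  have pol: "\<forall>s\<in>es_ev (tilde S). es_pol (tilde A) (tmap A \<sigma> s) = es_pol (tilde S) s"
  proof
    fix e assume "e \<in> es_ev (tilde S)"
    hence e: "e \<in> tev S" by simp
    show "es_pol (tilde A) (tmap A \<sigma> e) = es_pol (tilde S) e"
      using tmap_tev[OF e] pol_pres[OF tev_ev[OF S e]] by simp
  qed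
  have cf: "\<forall>X. conf (tilde S) X \<longrightarrow> conf (tilde A) (tmap A \<sigma> ` X) \<and> inj_on (tmap A \<sigma>) X"
  proof (intro allI impI)
    fix X assume "conf (tilde S) X"
    then obtain \<theta> where th: "\<theta> \<in> es_sym S" "X = primes S \<theta>" using conf_tilde_primes[OF S] by blast
    have "conf (tilde A) (tmap A \<sigma> ` X)" unfolding th(2) tmap_primes[OF th(1)] conf_tilde
      using T1[OF A act_sym[OF th(1)]] .
    moreover have "inj_on (tmap A \<sigma>) X"
    proof (rule inj_onI)
      fix e1 e2 assume e1: "e1 \<in> X" and e2: "e2 \<in> X" and eq: "tmap A \<sigma> e1 = tmap A \<sigma> e2"
      obtain a b where ab: "(a,b) \<in> \<theta>" "e1 = ((a,b), pr S \<theta> a)" using e1 unfolding th(2) primes_mem by blast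
      obtain c d where cd: "(c,d) \<in> \<theta>" "e2 = ((c,d), pr S \<theta> c)" using e2 unfolding th(2) primes_mem by blast
      have "\<sigma> a = \<sigma> c" "\<sigma> b = \<sigma> d" using eq K[OF th(1) ab(1)] K[OF th(1) cd(1)] ab(2) cd(2) by auto
      hence "a = c" "b = d" using inj_dom[OF th(1), of a c] inj_ran[OF th(1), of b d] ab(1) cd(1) by blast+
      thus "e1 = e2" using ab cd by simp
    qed
    ultimately show "conf (tilde A) (tmap A \<sigma> ` X) \<and> inj_on (tmap A \<sigma>) X" by simp
  qed
  have sy: "\<forall>\<Theta>\<in>es_sym (tilde S). act (tmap A \<sigma>) \<Theta> \<in> es_sym (tilde A)"
  proof
    fix \<Theta> assume "\<Theta> \<in> es_sym (tilde S)"
    then obtain \<theta> \<phi> \<psi> where v: "valid S \<theta> \<phi> \<psi>" and P: "\<Theta> = hrel S \<theta> \<phi> \<psi>" using hsym_E[OF S] by metis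
    show "act (tmap A \<sigma>) \<Theta> \<in> es_sym (tilde A)" using act_hrel[OF v] H2[OF A act_valid[OF v]] P by simp
  qed
  show ?thesis unfolding essp_map_def es_map_def
    using is_essp_tilde[OF S] is_essp_tilde[OF A] ev pol cf sy by blast
qed

end



lemma hrel_mono:
  assumes A: "is_essp A" and v1: "valid A \<theta>1 \<phi>1 \<psi>1" and v2: "valid A \<theta>2 \<phi>2 \<psi>2"
    and s: "\<theta>1 \<subseteq> \<theta>2" "\<phi>1 \<subseteq> \<phi>2" "\<psi>1 \<subseteq> \<psi>2"
  shows "hrel A \<theta>1 \<phi>1 \<psi>1 \<subseteq> hrel A \<theta>2 \<phi>2 \<psi>2"
proof
  fix q assume q: "q \<in> hrel A \<theta>1 \<phi>1 \<psi>1"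
  obtain e e' where q': "q = (e,e')" by (rule prod.exhaust)
  obtain a b a' b' where m: "(a,b) \<in> \<theta>1" "(a,a') \<in> \<phi>1" "(b,b') \<in> \<psi>1"
    "e = ((a,b), pr A \<theta>1 a)" "e' = ((a',b'), pr A (conj3 \<phi>1 \<theta>1 \<psi>1) a')"
    using q unfolding q' hrel_mem by blast
  have "(a',b') \<in> conj3 \<phi>1 \<theta>1 \<psi>1" unfolding conj3_mem using m by blast
  hence e1: "pr A (conj3 \<phi>1 \<theta>1 \<psi>1) a' = pr A (conj3 \<phi>2 \<theta>2 \<psi>2) a'"
    using pr_conj3_eq[OF A v1 v2 s(2) s(1) s(3)] by blast
  have e2: "pr A \<theta>1 a = pr A \<theta>2 a" using pr_eq[OF A valid_D(1)[OF v1] valid_D(1)[OF v2] s(1)] m(1) by blast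
  show "q \<in> hrel A \<theta>2 \<phi>2 \<psi>2" unfolding q' hrel_mem using m e1 e2 s by blast
qed

lemma hrel_back:
  assumes A: "is_essp A" and v1: "valid A \<theta>1 \<phi>1 \<psi>1" and v2: "valid A \<theta>2 \<phi>2 \<psi>2"
    and s: "\<theta>1 \<subseteq> \<theta>2" "\<phi>1 \<subseteq> \<phi>2" "\<psi>1 \<subseteq> \<psi>2"
    and m: "(a,b) \<in> \<theta>1" "(a,a') \<in> \<phi>2" "(b,b') \<in> \<psi>2"
  shows "(a,a') \<in> \<phi>1" "(b,b') \<in> \<psi>1"
    "(((a,b), pr A \<theta>2 a), ((a',b'), pr A (conj3 \<phi>2 \<theta>2 \<psi>2) a')) \<in> hrel A \<theta>1 \<phi>1 \<psi>1"
proof -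
  note vd1 = valid_D[OF v1] and vd2 = valid_D[OF v2]
  obtain a1 where a1: "(a,a1) \<in> \<phi>1" using m(1) vd1(4) by blast
  hence "a1 = a'" using sym_fun[OF A vd2(2)] s(2) m(2) by blast
  thus p: "(a,a') \<in> \<phi>1" using a1 by simp
  obtain b1 where b1: "(b,b1) \<in> \<psi>1" using m(1) vd1(5) by blast
  hence "b1 = b'" using sym_fun[OF A vd2(3)] s(3) m(3) by blast
  thus q: "(b,b') \<in> \<psi>1" using b1 by simp
  have "(((a,b), pr A \<theta>1 a), ((a',b'), pr A (conj3 \<phi>1 \<theta>1 \<psi>1) a')) \<in> hrel A \<theta>1 \<phi>1 \<psi>1"
    unfolding hrel_mem using m(1) p q by blast
  moreover have "(a',b') \<in> conj3 \<phi>1 \<theta>1 \<psi>1" unfolding conj3_mem using m(1) p q by blast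
  hence "pr A (conj3 \<phi>1 \<theta>1 \<psi>1) a' = pr A (conj3 \<phi>2 \<theta>2 \<psi>2) a'"
    using pr_conj3_eq[OF A v1 v2 s(2) s(1) s(3)] by blast
  moreover have "pr A \<theta>1 a = pr A \<theta>2 a" using pr_eq[OF A vd1(1) vd2(1) s(1)] m(1) by blast
  ultimately show "(((a,b), pr A \<theta>2 a), ((a',b'), pr A (conj3 \<phi>2 \<theta>2 \<psi>2) a')) \<in> hrel A \<theta>1 \<phi>1 \<psi>1" by simp
qed

lemma hrel_sub:
  assumes A: "is_essp A" and v: "valid A \<theta> \<phi> \<psi>" and v1: "valid A \<theta>1 \<phi>1 \<psi>1"
    and s: "hrel A \<theta> \<phi> \<psi> \<subseteq> hrel A \<theta>1 \<phi>1 \<psi>1"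
  shows "\<theta> \<subseteq> \<theta>1" "\<phi> \<subseteq> \<phi>1" "\<psi> \<subseteq> \<psi>1"
proof -
  note vd = valid_D[OF v]
  have key: "\<And>a b a' b'. (a,b) \<in> \<theta> \<Longrightarrow> (a,a') \<in> \<phi> \<Longrightarrow> (b,b') \<in> \<psi> \<Longrightarrow>
     (a,b) \<in> \<theta>1 \<and> (a,a') \<in> \<phi>1 \<and> (b,b') \<in> \<psi>1"
  proof -
    fix a b a' b' assume m: "(a,b) \<in> \<theta>" "(a,a') \<in> \<phi>" "(b,b') \<in> \<psi>"
    have "(((a,b), pr A \<theta> a), ((a',b'), pr A (conj3 \<phi> \<theta> \<psi>) a')) \<in> hrel A \<theta>1 \<phi>1 \<psi>1"
      using s m unfolding hrel_def by blast
    then obtain c d c' d' where n: "(c,d) \<in> \<theta>1" "(c,c') \<in> \<phi>1" "(d,d') \<in> \<psi>1"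
      "((a,b), pr A \<theta> a) = ((c,d), pr A \<theta>1 c)" "((a',b'), pr A (conj3 \<phi> \<theta> \<psi>) a') = ((c',d'), pr A (conj3 \<phi>1 \<theta>1 \<psi>1) c')"
      unfolding hrel_mem by blast
    thus "(a,b) \<in> \<theta>1 \<and> (a,a') \<in> \<phi>1 \<and> (b,b') \<in> \<psi>1" by auto
  qed
  show "\<theta> \<subseteq> \<theta>1"
  proof
    fix p assume p: "p \<in> \<theta>"
    obtain a b where p': "p = (a,b)" by (rule prod.exhaust)
    obtain a' where "(a,a') \<in> \<phi>" using p p' vd(4) by blast
    moreover obtain b' where "(b,b') \<in> \<psi>" using p p' vd(5) by blast
    ultimately show "p \<in> \<theta>1" using key p p' by blast
  qed
  show "\<phi> \<subseteq> \<phi>1"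
  proof
    fix p assume p: "p \<in> \<phi>"
    obtain a a' where p': "p = (a,a')" by (rule prod.exhaust)
    obtain b where b: "(a,b) \<in> \<theta>" using p p' vd(4) by blast
    moreover obtain b' where "(b,b') \<in> \<psi>" using b vd(5) by blast
    ultimately show "p \<in> \<phi>1" using key p p' by blast
  qed
  show "\<psi> \<subseteq> \<psi>1"
  proof
    fix p assume p: "p \<in> \<psi>"
    obtain b b' where p': "p = (b,b')" by (rule prod.exhaust)
    obtain a where a: "(a,b) \<in> \<theta>" using p p' vd(5) by blast
    moreover obtain a' where "(a,a') \<in> \<phi>" using a vd(4) by blast
    ultimately show "p \<in> \<psi>1" using key p p' by blast
  qed
qed

lemma new_pos:
  fixes S :: "'a essp"
  assumes A: "is_essp S" and v: "valid S \<theta> \<phi> \<psi>" and v1: "valid S \<theta>1 \<phi>1 \<psi>1"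
    and s: "hrel S \<theta> \<phi> \<psi> \<subseteq> hrel S \<theta>1 \<phi>1 \<psi>1"
    and pos: "\<forall>(e, e')\<in>hrel S \<theta>1 \<phi>1 \<psi>1 - hrel S \<theta> \<phi> \<psi>. es_pol (tilde S) e \<and> es_pol (tilde S) e'"
  shows "\<forall>(x, x')\<in>\<phi>1 - \<phi>. es_pol S x \<and> es_pol S x'" "\<forall>(y, y')\<in>\<psi>1 - \<psi>. es_pol S y \<and> es_pol S y'"
proof -
  note vd1 = valid_D[OF v1] and vd = valid_D[OF v]
  note ss = hrel_sub[OF A v v1 s]
  show "\<forall>(x, x')\<in>\<phi>1 - \<phi>. es_pol S x \<and> es_pol S x'"
  proof (intro ballI)
    fix p assume p: "p \<in> \<phi>1 - \<phi>"
    obtain x x' where p': "p = (x,x')" by (rule prod.exhaust)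
    obtain y where y: "(x,y) \<in> \<theta>1" using p p' vd1(4) by blast
    obtain y' where y': "(y,y') \<in> \<psi>1" using y vd1(5) by blast
    define q where "q = (((x,y), pr S \<theta>1 x), ((x',y'), pr S (conj3 \<phi>1 \<theta>1 \<psi>1) x'))"
    have "q \<in> hrel S \<theta>1 \<phi>1 \<psi>1" unfolding q_def hrel_mem using y y' p p' by blast
    moreover have "q \<notin> hrel S \<theta> \<phi> \<psi>"
    proof
      assume "q \<in> hrel S \<theta> \<phi> \<psi>"
      then obtain a b a' b' where "(a,a') \<in> \<phi>" "((x,y), pr S \<theta>1 x) = ((a,b), pr S \<theta> a)"
        "((x',y'), pr S (conj3 \<phi>1 \<theta>1 \<psi>1) x') = ((a',b'), pr S (conj3 \<phi> \<theta> \<psi>) a')"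
        unfolding q_def hrel_mem by blast
      thus False using p p' by auto
    qed
    ultimately have "q \<in> hrel S \<theta>1 \<phi>1 \<psi>1 - hrel S \<theta> \<phi> \<psi>" by blast
    hence "case q of (e, e') \<Rightarrow> es_pol (tilde S) e \<and> es_pol (tilde S) e'" using pos by blast
    thus "case p of (x, x') \<Rightarrow> es_pol S x \<and> es_pol S x'" using p' unfolding q_def by simp
  qed
  show "\<forall>(y, y')\<in>\<psi>1 - \<psi>. es_pol S y \<and> es_pol S y'"
  proof (intro ballI)
    fix p assume p: "p \<in> \<psi>1 - \<psi>"
    obtain y y' where p': "p = (y,y')" by (rule prod.exhaust)
    obtain x where x: "(x,y) \<in> \<theta>1" using p p' vd1(5) by blast
    obtain x' where x': "(x,x') \<in> \<phi>1" using x vd1(4) by blast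
    define q where "q = (((x,y), pr S \<theta>1 x), ((x',y'), pr S (conj3 \<phi>1 \<theta>1 \<psi>1) x'))"
    have "q \<in> hrel S \<theta>1 \<phi>1 \<psi>1" unfolding q_def hrel_mem using x x' p p' by blast
    moreover have "q \<notin> hrel S \<theta> \<phi> \<psi>"
    proof
      assume "q \<in> hrel S \<theta> \<phi> \<psi>"
      then obtain a b a' b' where "(b,b') \<in> \<psi>" "((x,y), pr S \<theta>1 x) = ((a,b), pr S \<theta> a)"
        "((x',y'), pr S (conj3 \<phi>1 \<theta>1 \<psi>1) x') = ((a',b'), pr S (conj3 \<phi> \<theta> \<psi>) a')"
        unfolding q_def hrel_mem by blast
      thus False using p p' by auto
    qed
    ultimately have "q \<in> hrel S \<theta>1 \<phi>1 \<psi>1 - hrel S \<theta> \<phi> \<psi>" by blast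
    hence "case q of (e, e') \<Rightarrow> es_pol (tilde S) e \<and> es_pol (tilde S) e'" using pos by blast
    hence px: "es_pol S x" "es_pol S x'" unfolding q_def by simp_all
    have "es_pol S x = es_pol S y" using sym_pol[OF A vd1(1) x] .
    moreover have "(x',y') \<in> conj3 \<phi>1 \<theta>1 \<psi>1" unfolding conj3_mem using x x' p p' by blast
    hence "es_pol S x' = es_pol S y'" using sym_pol[OF A conj3_sym(1)[OF A v1]] by blast
    ultimately show "case p of (y, y') \<Rightarrow> es_pol S y \<and> es_pol S y'" using px p' by simp
  qed
qed

lemma thin_D:
  assumes "thin S" "\<theta> \<in> es_sym S" "\<theta>1 \<in> es_sym S" "\<theta>2 \<in> es_sym S" "\<theta> \<subseteq> \<theta>1" "\<theta> \<subseteq> \<theta>2"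
    "\<forall>(s, s')\<in>\<theta>1 - \<theta>. es_pol S s \<and> es_pol S s'" "\<forall>(s, s')\<in>\<theta>2 - \<theta>. es_pol S s \<and> es_pol S s'"
    "conf S (Domain \<theta>1 \<union> Domain \<theta>2)"
  shows "\<theta>1 \<union> \<theta>2 \<in> es_sym S"
  using assms unfolding thin_def by blast

lemma thin_tilde:
  fixes S :: "'a essp"
  assumes S: "is_essp S" and th: "thin S"
  shows "thin (tilde S)"
  unfolding thin_def
proof (intro allI impI, elim conjE)
  fix \<Theta> \<Theta>1 \<Theta>2
  assume T: "\<Theta> \<in> es_sym (tilde S)" and T1: "\<Theta>1 \<in> es_sym (tilde S)" and T2: "\<Theta>2 \<in> es_sym (tilde S)"
    and s1: "\<Theta> \<subseteq> \<Theta>1" and s2: "\<Theta> \<subseteq> \<Theta>2"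
    and p1: "\<forall>(s, s')\<in>\<Theta>1 - \<Theta>. es_pol (tilde S) s \<and> es_pol (tilde S) s'"
    and p2: "\<forall>(s, s')\<in>\<Theta>2 - \<Theta>. es_pol (tilde S) s \<and> es_pol (tilde S) s'"
    and c: "conf (tilde S) (Domain \<Theta>1 \<union> Domain \<Theta>2)"
  obtain \<theta> \<phi> \<psi> where v: "valid S \<theta> \<phi> \<psi>" and P: "\<Theta> = hrel S \<theta> \<phi> \<psi>" using hsym_E[OF S T] by metis
  obtain \<theta>1 \<phi>1 \<psi>1 where v1: "valid S \<theta>1 \<phi>1 \<psi>1" and P1: "\<Theta>1 = hrel S \<theta>1 \<phi>1 \<psi>1" using hsym_E[OF S T1] by metis
  obtain \<theta>2 \<phi>2 \<psi>2 where v2: "valid S \<theta>2 \<phi>2 \<psi>2" and P2: "\<Theta>2 = hrel S \<theta>2 \<phi>2 \<psi>2" using hsym_E[OF S T2] by metis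
  note vd = valid_D[OF v] and vd1 = valid_D[OF v1] and vd2 = valid_D[OF v2]
  note ss1 = hrel_sub[OF S v v1 s1[unfolded P P1]] and ss2 = hrel_sub[OF S v v2 s2[unfolded P P2]]
  note np1 = new_pos[OF S v v1 s1[unfolded P P1] p1[unfolded P P1]]
  note np2 = new_pos[OF S v v2 s2[unfolded P P2] p2[unfolded P P2]]
  obtain \<theta>12 where t12: "\<theta>12 \<in> es_sym S" "Domain \<Theta>1 \<union> Domain \<Theta>2 = primes S \<theta>12"
    using conf_tilde_primes[OF S c] by blast
  have "\<theta>12 = \<theta>1 \<union> \<theta>2"
  proof -
    have "fst ` (Domain \<Theta>1 \<union> Domain \<Theta>2) = \<theta>1 \<union> \<theta>2"
      unfolding P1 P2 hrel_dom[OF v1] hrel_dom[OF v2] image_Un by simp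
    thus ?thesis using t12(2) by simp
  qed
  hence u: "\<theta>1 \<union> \<theta>2 \<in> es_sym S" using t12 by simp
  have phi: "\<phi>1 \<union> \<phi>2 \<in> es_sym S"
    using thin_D[OF th vd(2) vd1(2) vd2(2) ss1(2) ss2(2) np1(1) np2(1)] sym_domc[OF S u] vd1(4) vd2(4)
    by (simp add: Domain_Un_eq)
  have psi: "\<psi>1 \<union> \<psi>2 \<in> es_sym S"
    using thin_D[OF th vd(3) vd1(3) vd2(3) ss1(3) ss2(3) np1(2) np2(2)] sym_ranc[OF S u] vd1(5) vd2(5)
    by (simp add: Range_Un_eq)
  have v12: "valid S (\<theta>1 \<union> \<theta>2) (\<phi>1 \<union> \<phi>2) (\<psi>1 \<union> \<psi>2)"
    unfolding valid_def using u phi psi vd1 vd2 by (simp add: Domain_Un_eq Range_Un_eq)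
  have "\<Theta>1 \<union> \<Theta>2 = hrel S (\<theta>1 \<union> \<theta>2) (\<phi>1 \<union> \<phi>2) (\<psi>1 \<union> \<psi>2)"
  proof
    show "\<Theta>1 \<union> \<Theta>2 \<subseteq> hrel S (\<theta>1 \<union> \<theta>2) (\<phi>1 \<union> \<phi>2) (\<psi>1 \<union> \<psi>2)"
      unfolding P1 P2 using hrel_mono[OF S v1 v12] hrel_mono[OF S v2 v12] by blast
    show "hrel S (\<theta>1 \<union> \<theta>2) (\<phi>1 \<union> \<phi>2) (\<psi>1 \<union> \<psi>2) \<subseteq> \<Theta>1 \<union> \<Theta>2"
    proof
      fix q assume q: "q \<in> hrel S (\<theta>1 \<union> \<theta>2) (\<phi>1 \<union> \<phi>2) (\<psi>1 \<union> \<psi>2)"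
      obtain e e' where q': "q = (e,e')" by (rule prod.exhaust)
      obtain a b a' b' where m: "(a,b) \<in> \<theta>1 \<union> \<theta>2" "(a,a') \<in> \<phi>1 \<union> \<phi>2" "(b,b') \<in> \<psi>1 \<union> \<psi>2"
        "e = ((a,b), pr S (\<theta>1 \<union> \<theta>2) a)" "e' = ((a',b'), pr S (conj3 (\<phi>1 \<union> \<phi>2) (\<theta>1 \<union> \<theta>2) (\<psi>1 \<union> \<psi>2)) a')"
        using q unfolding q' hrel_mem by blast
      show "q \<in> \<Theta>1 \<union> \<Theta>2"
      proof (cases "(a,b) \<in> \<theta>1")
        case True
        have "q \<in> \<Theta>1" unfolding P1 q' m(4,5)
          using hrel_back(3)[OF S v1 v12 _ _ _ True m(2,3)] by blast
        thus ?thesis by blast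
      next
        case False
        hence "(a,b) \<in> \<theta>2" using m(1) by blast
        hence "q \<in> \<Theta>2" unfolding P2 q' m(4,5)
          using hrel_back(3)[OF S v2 v12 _ _ _ _ m(2,3)] by blast
        thus ?thesis by blast
      qed
    qed
  qed
  thus "\<Theta>1 \<union> \<Theta>2 \<in> es_sym (tilde S)" using H2[OF S v12] by simp
qed



lemma sub_eq_dom:
  assumes A: "is_essp A" and th': "\<theta>' \<in> es_sym A" and s: "\<theta> \<subseteq> \<theta>'" and d: "Domain \<theta> = Domain \<theta>'"
  shows "\<theta> = \<theta>'"
proof
  show "\<theta> \<subseteq> \<theta>'" using s .
  show "\<theta>' \<subseteq> \<theta>"
  proof
    fix p assume p: "p \<in> \<theta>'"
    obtain x y where p': "p = (x,y)" by (rule prod.exhaust)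
    obtain y2 where y2: "(x,y2) \<in> \<theta>" using p p' d by blast
    hence "y2 = y" using sym_fun[OF A th'] s p p' by blast
    thus "p \<in> \<theta>" using y2 p' by simp
  qed
qed

lemma tev_eq:
  fixes A :: "'a essp"
  assumes A: "is_essp A" and d: "d \<in> tev A" and f: "f \<in> tev A" and s: "snd d = snd f"
  shows "d = f"
proof -
  have l1: "es_le (tilde A) d f" using d f s by simp
  have l2: "es_le (tilde A) f d" using d f s by simp
  show ?thesis using es_antisym[OF is_es_tilde[OF A] l1 l2] .
qed

lemma tev_lt:
  fixes A :: "'a essp"
  assumes A: "is_essp A"
  shows "es_lt (tilde A) d f \<longleftrightarrow> d \<in> tev A \<and> f \<in> tev A \<and> snd d \<subseteq> snd f \<and> snd d \<noteq> snd f"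
  unfolding es_lt_def using tev_eq[OF A, of d f] by auto

lemma dn_le: "is_es A \<Longrightarrow> c \<in> es_ev A \<Longrightarrow> dn A c \<subseteq> dn A d \<Longrightarrow> es_le A c d"
proof -
  assume h: "is_es A" "c \<in> es_ev A" "dn A c \<subseteq> dn A d"
  have "c \<in> dn A c" using dn_self[OF h(1,2)] .
  hence "c \<in> dn A d" using h(3) by blast
  thus ?thesis unfolding dn_def by simp
qed

lemma imm_down:
  fixes S :: "'a essp"
  assumes S: "is_essp S" and i: "imm (tilde S) e e'"
  shows "imm S (fst (fst e)) (fst (fst e'))"
proof -
  have es: "is_es S" using essp_es[OF S] .
  have lt: "e \<in> tev S" "e' \<in> tev S" "snd e \<subseteq> snd e'" "snd e \<noteq> snd e'"
    using i unfolding imm_def tev_lt[OF S] by auto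
  have nb: "\<not> (\<exists>c. es_lt (tilde S) e c \<and> es_lt (tilde S) c e')" using i unfolding imm_def by blast
  define s1 where "s1 = fst (fst e)"
  define t1 where "t1 = fst (fst e')"
  have d1: "Domain (snd e) = dn S s1" and d2: "Domain (snd e') = dn S t1"
    using tev_dom lt unfolding s1_def t1_def by blast+
  have s1ev: "s1 \<in> es_ev S" and t1ev: "t1 \<in> es_ev S" using tev_ev[OF S] lt unfolding s1_def t1_def by blast+
  have sdom: "dn S s1 \<subseteq> dn S t1" using d1 d2 lt(3) by blast
  have le: "es_le S s1 t1" using dn_le[OF es s1ev sdom] .
  have ne: "s1 \<noteq> t1"
  proof
    assume "s1 = t1"
    hence "snd e = snd e'" using sub_eq_dom[OF S tev_sym[OF lt(2)] lt(3)] d1 d2 by simp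
    thus False using lt(4) by simp
  qed
  have nc: "\<not> (\<exists>c. es_lt S s1 c \<and> es_lt S c t1)"
  proof
    assume "\<exists>c. es_lt S s1 c \<and> es_lt S c t1"
    then obtain c where c: "es_le S s1 c" "s1 \<noteq> c" "es_le S c t1" "c \<noteq> t1" unfolding es_lt_def by blast
    have "c \<in> Domain (snd e')" using d2 c(3) unfolding dn_def by simp
    then obtain d where cd: "(c,d) \<in> snd e'" by blast
    define f where "f = ((c,d), pr S (snd e') c)"
    have ft: "f \<in> tev S" unfolding f_def using tev_prime[OF S tev_sym[OF lt(2)] cd] .
    have fd: "Domain (snd f) = dn S c" unfolding f_def using pr_sym(2)[OF S tev_sym[OF lt(2)]] cd by auto
    have cev: "c \<in> es_ev S" using es_le_ev[OF es c(3)] by blast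
    have "snd e \<subseteq> snd f"
    proof
      fix p assume p: "p \<in> snd e"
      hence "fst p \<in> Domain (snd e)" by (metis Domain.DomainI prod.collapse)
      hence "fst p \<in> dn S s1" using d1 by simp
      hence "es_le S (fst p) c" using es_trans[OF es _ c(1)] unfolding dn_def by blast
      thus "p \<in> snd f" unfolding f_def pr_def using p lt(3) by auto
    qed
    moreover have "snd e \<noteq> snd f" using d1 fd dn_inj[OF es s1ev cev] c(2) by metis
    moreover have "snd f \<subseteq> snd e'" unfolding f_def using pr_sub by simp
    moreover have "snd f \<noteq> snd e'" using d2 fd dn_inj[OF es cev t1ev] c(4) by metis
    ultimately have "es_lt (tilde S) e f \<and> es_lt (tilde S) f e'" unfolding tev_lt[OF S] using lt ft by blast
    thus False using nb by blast
  qed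
  show ?thesis unfolding imm_def es_lt_def using le ne nc unfolding s1_def t1_def es_lt_def by blast
qed

context mp
begin

lemma imm_up:
  assumes e: "e \<in> tev S" and e': "e' \<in> tev S" and s: "snd e \<subseteq> snd e'"
    and i: "imm A (\<sigma> (fst (fst e))) (\<sigma> (fst (fst e')))"
  shows "imm (tilde A) (tmap A \<sigma> e) (tmap A \<sigma> e')"
proof -
  have es: "is_es A" using essp_es[OF A] .
  define s1 where "s1 = fst (fst e)"
  define t1 where "t1 = fst (fst e')"
  define E where "E = tmap A \<sigma> e"
  define E' where "E' = tmap A \<sigma> e'"
  have Ee: "E = ((\<sigma> s1, \<sigma> (snd (fst e))), pr A (act \<sigma> (snd e)) (\<sigma> s1))" unfolding E_def s1_def using tmap_tev[OF e] .
  have Ee': "E' = ((\<sigma> t1, \<sigma> (snd (fst e'))), pr A (act \<sigma> (snd e')) (\<sigma> t1))" unfolding E'_def t1_def using tmap_tev[OF e'] .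
  have Et: "E \<in> tev A" and Et': "E' \<in> tev A"
    using tmap_essp_map unfolding essp_map_def es_map_def E_def E'_def using e e' by auto
  have lt: "es_le A (\<sigma> s1) (\<sigma> t1)" "\<sigma> s1 \<noteq> \<sigma> t1" and nb: "\<not> (\<exists>c. es_lt A (\<sigma> s1) c \<and> es_lt A c (\<sigma> t1))"
    using i unfolding imm_def es_lt_def s1_def t1_def by blast+
  have dE: "Domain (snd E) = dn A (\<sigma> s1)" and dE': "Domain (snd E') = dn A (\<sigma> t1)"
    using tev_dom[OF Et] tev_dom[OF Et'] Ee Ee' by simp_all
  have sub: "snd E \<subseteq> snd E'"
    unfolding Ee Ee' pr_def using act_mono[OF s, of \<sigma>] es_trans[OF es _ lt(1)] by auto
  have sev: "\<sigma> s1 \<in> es_ev A" and tev': "\<sigma> t1 \<in> es_ev A" using es_le_ev[OF es lt(1)] by auto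
  have ne: "snd E \<noteq> snd E'" using dE dE' dn_inj[OF es sev tev'] lt(2) by metis
  have nc: "\<not> (\<exists>D. es_lt (tilde A) E D \<and> es_lt (tilde A) D E')"
  proof
    assume "\<exists>D. es_lt (tilde A) E D \<and> es_lt (tilde A) D E'"
    then obtain D where D: "D \<in> tev A" "snd E \<subseteq> snd D" "snd E \<noteq> snd D" "snd D \<subseteq> snd E'" "snd D \<noteq> snd E'"
      unfolding tev_lt[OF A] by blast
    define c where "c = fst (fst D)"
    have dD: "Domain (snd D) = dn A c" using tev_dom[OF D(1)] c_def by simp
    have cev: "c \<in> es_ev A" using tev_ev[OF A D(1)] c_def by simp
    have l1: "es_le A (\<sigma> s1) c" using dn_le[OF es sev] dE dD D(2) by (metis Domain_mono)
    have l2: "es_le A c (\<sigma> t1)" using dn_le[OF es cev] dE' dD D(4) by (metis Domain_mono)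
    have n1: "\<sigma> s1 \<noteq> c"
    proof
      assume "\<sigma> s1 = c"
      hence "snd E = snd D" using sub_eq_dom[OF A tev_sym[OF D(1)] D(2)] dE dD by simp
      thus False using D(3) by simp
    qed
    have n2: "c \<noteq> \<sigma> t1"
    proof
      assume "c = \<sigma> t1"
      hence "snd D = snd E'" using sub_eq_dom[OF A tev_sym[OF Et'] D(4)] dE' dD by simp
      thus False using D(5) by simp
    qed
    show False using nb l1 l2 n1 n2 unfolding es_lt_def by blast
  qed
  have "es_lt (tilde A) E E'" unfolding tev_lt[OF A] using Et Et' sub ne by blast
  thus ?thesis using nc unfolding imm_def E_def E'_def by blast
qed

lemma courteous_tilde:
  assumes c: "courteous S A \<sigma>"
  shows "courteous (tilde S) (tilde A) (tmap A \<sigma>)"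
  unfolding courteous_def
proof (intro allI impI, elim conjE)
  fix e e' assume i: "imm (tilde S) e e'" and p: "es_pol (tilde S) e \<or> \<not> es_pol (tilde S) e'"
  have lt: "e \<in> tev S" "e' \<in> tev S" "snd e \<subseteq> snd e'"
    using i unfolding imm_def tev_lt[OF S] by auto
  have "imm S (fst (fst e)) (fst (fst e'))" using imm_down[OF S i] .
  moreover have "es_pol S (fst (fst e)) \<or> \<not> es_pol S (fst (fst e'))" using p by simp
  ultimately have "imm A (\<sigma> (fst (fst e))) (\<sigma> (fst (fst e')))" using c unfolding courteous_def by blast
  thus "imm (tilde A) (tmap A \<sigma> e) (tmap A \<sigma> e')" using imm_up lt by blast
qed

end



lemma ext_insert:
  assumes A: "is_essp A" and th: "\<theta>A \<in> es_sym A" and s: "\<theta>0 \<subseteq> \<theta>A"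
    and d: "Domain \<theta>A = insert a (Domain \<theta>0)" and ab: "(a,b) \<in> \<theta>A"
  shows "\<theta>A = insert (a,b) \<theta>0"
proof
  show "insert (a,b) \<theta>0 \<subseteq> \<theta>A" using s ab by blast
  show "\<theta>A \<subseteq> insert (a,b) \<theta>0"
  proof
    fix p assume p: "p \<in> \<theta>A"
    obtain x y where p': "p = (x,y)" by (rule prod.exhaust)
    have "x \<in> insert a (Domain \<theta>0)" using d p p' by blast
    thus "p \<in> insert (a,b) \<theta>0"
    proof
      assume "x = a" thus ?thesis using sym_fun[OF A th ab] p p' by blast
    next
      assume "x \<in> Domain \<theta>0"
      then obtain y2 where y2: "(x,y2) \<in> \<theta>0" by blast
      hence "y2 = y" using sym_fun[OF A th] s p p' by blast
      thus ?thesis using y2 p' by simp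
    qed
  qed
qed

lemma theta_of:
  assumes v2: "valid A \<theta>2 \<phi>2 \<psi>2" and v: "valid A \<theta> \<phi> \<psi>"
    and eq: "insert q (hrel A \<theta> \<phi> \<psi>) = hrel A \<theta>2 \<phi>2 \<psi>2"
  shows "\<theta>2 = insert (fst (fst q)) \<theta>"
proof -
  have "Domain (hrel A \<theta>2 \<phi>2 \<psi>2) = insert (fst q) (primes A \<theta>)"
    unfolding eq[symmetric] using hrel_dom[OF v] by (metis Domain_insert prod.collapse)
  hence "primes A \<theta>2 = insert (fst q) (primes A \<theta>)" using hrel_dom[OF v2] by simp
  hence "fst ` primes A \<theta>2 = insert (fst (fst q)) (fst ` primes A \<theta>)" by simp
  thus ?thesis by simp
qed

lemma idon_ins: "Id_on (insert x D) = insert (x,x) (Id_on D)" by auto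

lemma act_Id: "act \<sigma> (Id_on D) = Id_on (\<sigma> ` D)"
  unfolding act_def by auto

context mp
begin

lemma sr_ex:
  assumes sr: "strong_receptive S A \<sigma>" and th: "\<theta> \<in> es_sym S" and n: "(a,b) \<notin> act \<sigma> \<theta>"
    and i: "insert (a,b) (act \<sigma> \<theta>) \<in> es_sym A" and pa: "\<not> es_pol A a" and pb: "\<not> es_pol A b"
  shows "\<exists>!p. insert p \<theta> \<in> es_sym S \<and> \<sigma> (fst p) = a \<and> \<sigma> (snd p) = b"
  using sr th n i pa pb unfolding strong_receptive_def by blast

lemma sr_tilde:
  assumes sr: "strong_receptive S A \<sigma>"
  shows "strong_receptive (tilde S) (tilde A) (tmap A \<sigma>)"
  unfolding strong_receptive_def
proof (intro ballI allI impI, elim conjE)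
  fix \<Theta> E1 E2
  assume T: "\<Theta> \<in> es_sym (tilde S)" and nin: "(E1,E2) \<notin> act (tmap A \<sigma>) \<Theta>"
    and ins: "insert (E1,E2) (act (tmap A \<sigma>) \<Theta>) \<in> es_sym (tilde A)"
    and n1: "\<not> es_pol (tilde A) E1" and n2: "\<not> es_pol (tilde A) E2"
  obtain \<theta> \<phi> \<psi> where v: "valid S \<theta> \<phi> \<psi>" and P: "\<Theta> = hrel S \<theta> \<phi> \<psi>" using hsym_E[OF S T] by metis
  note vd = valid_D[OF v]
  define tA where "tA = act \<sigma> \<theta>"
  define pA where "pA = act \<sigma> \<phi>"
  define qA where "qA = act \<sigma> \<psi>"
  have vs: "valid A tA pA qA" unfolding tA_def pA_def qA_def using act_valid[OF v] .
  note vsd = valid_D[OF vs]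
  have Ts: "act (tmap A \<sigma>) \<Theta> = hrel A tA pA qA" unfolding P tA_def pA_def qA_def using act_hrel[OF v] .
  obtain \<theta>A \<phi>A \<psi>A where vA: "valid A \<theta>A \<phi>A \<psi>A" and PA: "insert (E1,E2) (hrel A tA pA qA) = hrel A \<theta>A \<phi>A \<psi>A"
    using hsym_E[OF A ins] Ts by metis
  note vAd = valid_D[OF vA]
  have sA: "hrel A tA pA qA \<subseteq> hrel A \<theta>A \<phi>A \<psi>A" using PA by blast
  note ssA = hrel_sub[OF A vs vA sA]
  have "(E1,E2) \<in> hrel A \<theta>A \<phi>A \<psi>A" using PA by blast
  then obtain a1 b1 a1' b1' where m: "(a1,b1) \<in> \<theta>A" "(a1,a1') \<in> \<phi>A" "(b1,b1') \<in> \<psi>A"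
    "E1 = ((a1,b1), pr A \<theta>A a1)" "E2 = ((a1',b1'), pr A (conj3 \<phi>A \<theta>A \<psi>A) a1')"
    unfolding hrel_mem by blast
  have nt: "(a1,b1) \<notin> tA"
  proof
    assume ab1: "(a1,b1) \<in> tA"
    have "(E1,E2) \<in> hrel A tA pA qA" using hrel_back(3)[OF A vs vA ssA ab1 m(2,3)] m(4,5) by simp
    thus False using nin Ts by simp
  qed
  have tAeq: "\<theta>A = insert (a1,b1) tA" using theta_of[OF vA vs PA] m(4) by simp
  have a1n: "a1 \<notin> Domain tA"
  proof
    assume "a1 \<in> Domain tA"
    then obtain z where "(a1,z) \<in> tA" by blast
    hence "z = b1" using sym_fun[OF A vAd(1)] m(1) ssA(1) by blast
    thus False using nt \<open>(a1,z) \<in> tA\<close> by simp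
  qed
  have b1n: "b1 \<notin> Range tA"
  proof
    assume "b1 \<in> Range tA"
    then obtain z where "(z,b1) \<in> tA" by blast
    hence "z = a1" using sym_inj[OF A vAd(1)] m(1) ssA(1) by blast
    thus False using nt \<open>(z,b1) \<in> tA\<close> by simp
  qed
  have pAeq: "\<phi>A = insert (a1,a1') pA"
    using ext_insert[OF A vAd(2) ssA(2) _ m(2)] vAd(4) vsd(4) tAeq by simp
  have qAeq: "\<psi>A = insert (b1,b1') qA"
    using ext_insert[OF A vAd(3) ssA(3) _ m(3)] vAd(5) vsd(5) tAeq by simp
  have pa1: "\<not> es_pol A a1" using n1 m(4) by simp
  have pa1': "\<not> es_pol A a1'" using n2 m(5) by simp
  have pb1: "\<not> es_pol A b1" using pa1 sym_pol[OF A vAd(1) m(1)] by simp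
  have "(a1',b1') \<in> conj3 \<phi>A \<theta>A \<psi>A" unfolding conj3_mem using m by blast
  hence pb1': "\<not> es_pol A b1'" using pa1' sym_pol[OF A conj3_sym(1)[OF A vA]] by blast
  have ex\<theta>: "\<exists>!p. insert p \<theta> \<in> es_sym S \<and> \<sigma> (fst p) = a1 \<and> \<sigma> (snd p) = b1"
    using sr_ex[OF sr vd(1) _ _ pa1 pb1] nt vAd(1) tAeq unfolding tA_def by simp
  then obtain s1 t1 where st: "insert (s1,t1) \<theta> \<in> es_sym S" "\<sigma> s1 = a1" "\<sigma> t1 = b1" by (metis prod.collapse)
  have np: "(a1,a1') \<notin> pA" using a1n vsd(4) by blast
  have ex\<phi>: "\<exists>!p. insert p \<phi> \<in> es_sym S \<and> \<sigma> (fst p) = a1 \<and> \<sigma> (snd p) = a1'"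
    using sr_ex[OF sr vd(2) _ _ pa1 pa1'] np vAd(2) pAeq unfolding pA_def by simp
  then obtain x1 x1' where xx: "insert (x1,x1') \<phi> \<in> es_sym S" "\<sigma> x1 = a1" "\<sigma> x1' = a1'" by (metis prod.collapse)
  have nq: "(b1,b1') \<notin> qA" using b1n vsd(5) by blast
  have ex\<psi>: "\<exists>!p. insert p \<psi> \<in> es_sym S \<and> \<sigma> (fst p) = b1 \<and> \<sigma> (snd p) = b1'"
    using sr_ex[OF sr vd(3) _ _ pb1 pb1'] nq vAd(3) qAeq unfolding qA_def by simp
  then obtain y1 y1' where yy: "insert (y1,y1') \<psi> \<in> es_sym S" "\<sigma> y1 = b1" "\<sigma> y1' = b1'" by (metis prod.collapse)
  have idD: "Id_on (Domain \<theta>) \<in> es_sym S" using sym_id[OF S sym_domc[OF S vd(1)]] .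
  have aI: "act \<sigma> (Id_on (Domain \<theta>)) = Id_on (Domain tA)" unfolding act_Id tA_def act_dom ..
  have i1: "(a1,a1) \<notin> act \<sigma> (Id_on (Domain \<theta>))" unfolding aI using a1n by blast
  have "Id_on (Domain \<theta>A) = insert (a1,a1) (Id_on (Domain tA))" unfolding tAeq by auto
  hence i2: "insert (a1,a1) (act \<sigma> (Id_on (Domain \<theta>))) \<in> es_sym A"
    unfolding aI using sym_id[OF A sym_domc[OF A vAd(1)]] by simp
  have exI: "\<exists>!p. insert p (Id_on (Domain \<theta>)) \<in> es_sym S \<and> \<sigma> (fst p) = a1 \<and> \<sigma> (snd p) = a1"
    using sr_ex[OF sr idD i1 i2 pa1 pa1] .
  have c1: "insert (s1,s1) (Id_on (Domain \<theta>)) \<in> es_sym S"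
    using sym_id[OF S sym_domc[OF S st(1)]] by (simp add: idon_ins)
  have c2: "insert (x1,x1) (Id_on (Domain \<theta>)) \<in> es_sym S"
    using sym_id[OF S sym_domc[OF S xx(1)]] vd(4) by (simp add: idon_ins)
  have sx: "s1 = x1" using exI c1 c2 st(2) xx(2) by auto
  have idR: "Id_on (Range \<theta>) \<in> es_sym S" using sym_id[OF S sym_ranc[OF S vd(1)]] .
  have aR: "act \<sigma> (Id_on (Range \<theta>)) = Id_on (Range tA)" unfolding act_Id tA_def act_ran ..
  have j1: "(b1,b1) \<notin> act \<sigma> (Id_on (Range \<theta>))" unfolding aR using b1n by blast
  have "Id_on (Range \<theta>A) = insert (b1,b1) (Id_on (Range tA))" unfolding tAeq by auto
  hence j2: "insert (b1,b1) (act \<sigma> (Id_on (Range \<theta>))) \<in> es_sym A"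
    unfolding aR using sym_id[OF A sym_ranc[OF A vAd(1)]] by simp
  have exI2: "\<exists>!p. insert p (Id_on (Range \<theta>)) \<in> es_sym S \<and> \<sigma> (fst p) = b1 \<and> \<sigma> (snd p) = b1"
    using sr_ex[OF sr idR j1 j2 pb1 pb1] .
  have c3: "insert (t1,t1) (Id_on (Range \<theta>)) \<in> es_sym S"
    using sym_id[OF S sym_ranc[OF S st(1)]] by (simp add: idon_ins)
  have c4: "insert (y1,y1) (Id_on (Range \<theta>)) \<in> es_sym S"
    using sym_id[OF S sym_domc[OF S yy(1)]] vd(5) by (simp add: idon_ins)
  have ty: "t1 = y1" using exI2 c3 c4 st(3) yy(2) by auto
  define \<theta>1 where "\<theta>1 = insert (s1,t1) \<theta>"
  define \<phi>1 where "\<phi>1 = insert (s1,x1') \<phi>"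
  define \<psi>1 where "\<psi>1 = insert (t1,y1') \<psi>"
  have v1: "valid S \<theta>1 \<phi>1 \<psi>1" unfolding valid_def \<theta>1_def \<phi>1_def \<psi>1_def
    using st(1) xx(1) yy(1) sx ty vd by simp
  have s1n: "s1 \<notin> Domain \<theta>" using a1n st(2) unfolding tA_def act_dom by blast
  have t1n: "t1 \<notin> Range \<theta>" using b1n st(3) unfolding tA_def act_ran by blast
  have sub1: "\<theta> \<subseteq> \<theta>1" "\<phi> \<subseteq> \<phi>1" "\<psi> \<subseteq> \<psi>1" unfolding \<theta>1_def \<phi>1_def \<psi>1_def by auto
  define e1 where "e1 = ((s1,t1), pr S \<theta>1 s1)"
  define e2 where "e2 = ((x1',y1'), pr S (conj3 \<phi>1 \<theta>1 \<psi>1) x1')"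
  have H: "insert (e1,e2) \<Theta> = hrel S \<theta>1 \<phi>1 \<psi>1"
  proof
    have "(e1,e2) \<in> hrel S \<theta>1 \<phi>1 \<psi>1" unfolding hrel_mem e1_def e2_def \<theta>1_def \<phi>1_def \<psi>1_def by blast
    thus "insert (e1,e2) \<Theta> \<subseteq> hrel S \<theta>1 \<phi>1 \<psi>1" unfolding P using hrel_mono[OF S v v1 sub1] by blast
    show "hrel S \<theta>1 \<phi>1 \<psi>1 \<subseteq> insert (e1,e2) \<Theta>"
    proof
      fix q assume q: "q \<in> hrel S \<theta>1 \<phi>1 \<psi>1"
      obtain e e' where q': "q = (e,e')" by (rule prod.exhaust)
      obtain a b a' b' where mm: "(a,b) \<in> \<theta>1" "(a,a') \<in> \<phi>1" "(b,b') \<in> \<psi>1"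
        "e = ((a,b), pr S \<theta>1 a)" "e' = ((a',b'), pr S (conj3 \<phi>1 \<theta>1 \<psi>1) a')"
        using q unfolding q' hrel_mem by blast
      show "q \<in> insert (e1,e2) \<Theta>"
      proof (cases "(a,b) = (s1,t1)")
        case True
        hence "a' = x1'" using mm(2) s1n vd(4) unfolding \<phi>1_def by blast
        moreover have "b' = y1'" using True mm(3) t1n vd(5) unfolding \<psi>1_def by blast
        ultimately show ?thesis using True mm(4,5) unfolding q' e1_def e2_def by simp
      next
        case False
        hence "(a,b) \<in> \<theta>" using mm(1) unfolding \<theta>1_def by blast
        hence "q \<in> \<Theta>" unfolding P q' mm(4,5) using hrel_back(3)[OF S v v1 sub1 _ mm(2,3)] by blast
        thus ?thesis by blast
      qed
    qed
  qed
  have at1: "act \<sigma> \<theta>1 = \<theta>A" unfolding \<theta>1_def act_insert tAeq tA_def using st by simp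
  have ap1: "act \<sigma> \<phi>1 = \<phi>A" unfolding \<phi>1_def act_insert pAeq pA_def using st xx by simp
  have aq1: "act \<sigma> \<psi>1 = \<psi>A" unfolding \<psi>1_def act_insert qAeq qA_def using st yy ty by simp
  have te1: "tmap A \<sigma> e1 = E1" unfolding e1_def using K[OF valid_D(1)[OF v1], of s1 t1] at1 st m(4)
    unfolding \<theta>1_def by simp
  have c12: "(x1',y1') \<in> conj3 \<phi>1 \<theta>1 \<psi>1" unfolding conj3_mem \<theta>1_def \<phi>1_def \<psi>1_def by blast
  have te2: "tmap A \<sigma> e2 = E2" unfolding e2_def using K[OF conj3_sym(1)[OF S v1] c12] act_conj3[OF v1] ap1 at1 aq1 xx yy m(5) by simp
  have exist: "insert (e1,e2) \<Theta> \<in> es_sym (tilde S) \<and> tmap A \<sigma> (fst (e1,e2)) = E1 \<and> tmap A \<sigma> (snd (e1,e2)) = E2"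
    using H H2[OF S v1] te1 te2 by simp
  have uniq: "\<And>q. insert q \<Theta> \<in> es_sym (tilde S) \<and> tmap A \<sigma> (fst q) = E1 \<and> tmap A \<sigma> (snd q) = E2 \<Longrightarrow> q = (e1,e2)"
  proof -
    fix q assume qq: "insert q \<Theta> \<in> es_sym (tilde S) \<and> tmap A \<sigma> (fst q) = E1 \<and> tmap A \<sigma> (snd q) = E2"
    obtain \<theta>2 \<phi>2 \<psi>2 where v2: "valid S \<theta>2 \<phi>2 \<psi>2" and P2: "insert q (hrel S \<theta> \<phi> \<psi>) = hrel S \<theta>2 \<phi>2 \<psi>2"
      using hsym_E[OF S, of "insert q \<Theta>"] qq P by metis
    note vd2 = valid_D[OF v2]
    have "hrel S \<theta> \<phi> \<psi> \<subseteq> hrel S \<theta>2 \<phi>2 \<psi>2" using P2 by blast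
    note ss2 = hrel_sub[OF S v v2 this]
    have "q \<in> hrel S \<theta>2 \<phi>2 \<psi>2" using P2 by blast
    then obtain u v u' v' where mq: "(u,v) \<in> \<theta>2" "(u,u') \<in> \<phi>2" "(v,v') \<in> \<psi>2"
      "q = (((u,v), pr S \<theta>2 u), ((u',v'), pr S (conj3 \<phi>2 \<theta>2 \<psi>2) u'))"
      by (metis hrel_mem prod.collapse)
    have uv: "\<sigma> u = a1" "\<sigma> v = b1" using qq mq(4) K[OF vd2(1) mq(1)] m(4) by auto
    have "(u',v') \<in> conj3 \<phi>2 \<theta>2 \<psi>2" unfolding conj3_mem using mq by blast
    hence uv': "\<sigma> u' = a1'" "\<sigma> v' = b1'" using qq mq(4) K[OF conj3_sym(1)[OF S v2]] m(5) by auto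
    have t2: "\<theta>2 = insert (u,v) \<theta>" using theta_of[OF v2 v P2] mq(4) by simp
    have "(u,v) = (s1,t1)" using ex\<theta> st vd2(1) t2 uv by (metis fst_conv snd_conv)
    hence us: "u = s1" "v = t1" by auto
    have p2: "\<phi>2 = insert (u,u') \<phi>" using ext_insert[OF S vd2(2) ss2(2) _ mq(2)] vd2(4) vd(4) t2 by simp
    have "(u,u') = (x1,x1')" using ex\<phi> xx vd2(2) p2 uv uv' by (metis fst_conv snd_conv)
    hence u': "u' = x1'" by simp
    have q2: "\<psi>2 = insert (v,v') \<psi>" using ext_insert[OF S vd2(3) ss2(3) _ mq(3)] vd2(5) vd(5) t2 by simp
    have "(v,v') = (y1,y1')" using ex\<psi> yy vd2(3) q2 uv uv' by (metis fst_conv snd_conv)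
    hence v': "v' = y1'" by simp
    have "\<theta>2 = \<theta>1" "\<phi>2 = \<phi>1" "\<psi>2 = \<psi>1" unfolding \<theta>1_def \<phi>1_def \<psi>1_def using t2 p2 q2 us u' v' by auto
    thus "q = (e1,e2)" using mq(4) us u' v' unfolding e1_def e2_def by simp
  qed
  show "\<exists>!p. insert p \<Theta> \<in> es_sym (tilde S) \<and> tmap A \<sigma> (fst p) = E1 \<and> tmap A \<sigma> (snd p) = E2"
    using exist uniq by blast
qed

end

theorem mainTheorem5:
  fixes S :: "'a essp" and A :: "'b essp" and \<sigma> :: "'a \<Rightarrow> 'b"
  assumes "tstrategy S A \<sigma>"
  shows "tstrategy (tilde S) (tilde A) (tmap A \<sigma>)"
proof -
  have m: "essp_map S A \<sigma>" and c: "courteous S A \<sigma>" and sr: "strong_receptive S A \<sigma>" and th: "thin S"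
    using assms unfolding tstrategy_def by auto
  interpret mp S A \<sigma> using m by unfold_locales
  show ?thesis unfolding tstrategy_def
    using tmap_essp_map courteous_tilde[OF c] sr_tilde[OF sr] thin_tilde[OF S th] by blast
qed

end
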